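(* Let $X_1$ be a random vector in $\mathbb R^d$ such that $0\in\operatorname{int}\mathcal D_{\mathcal L}$. Let $B\subset BV[0,1]$ be such that $\operatorname{cl}_{\rho_1'}(B)=\operatorname{cl}_{\rho_*}(B)$, closures taken in $BV[0,1]$ with respect to the indicated metrics. Then $$\inf_{h\in\operatorname{cl}_{\rho_1'}(B)}I_D(h)=\lim_{\varepsilon\to0+}\inf_{h\in B^\varepsilon_{\rho_1'}}I_D(h),$$ where $B^\varepsilon_{\rho_1'}$ is the open $\varepsilon$-neighbourhood of $B$ in $(BV[0,1],\rho_1')$; and unless $B$ is empty, the infimum on the left-hand side is attained at some $h\in\operatorname{cl}_{\rho_1'}(B)$.
   Context: $\mathcal L(u):=\mathbb Ee^{u\cdot X_1}$, $\mathcal D_{\mathcal L}:=\{u:\mathcal L(u)<\infty\}$, $K:=\log\mathcal L$, $I(v):=\sup_u(u\cdot v-K(u))$. $D[0,1]$: càdlàg functions $[0,1]\to\mathbb R^d$; for finite $\mathbf t\subset(0,1]$, $h^{\mathbf t}$ is the continuous function linear between consecutive points of $\mathbf t\cup\{0,1\}$ with $h^{\mathbf t}(0)=0$, $h^{\mathbf t}(s)=h(s)$ for $s\in\mathbf t\cup\{1\}$. $\operatorname{Var}(h):=\sup_{\mathbf t}\int_0^1|(h^{\mathbf t})'|ds$, $I_D(h):=\sup_{\mathbf t}\int_0^1 I((h^{\mathbf t})')ds$ (suprema over finite $\mathbf t\subset(0,1]$), $BV[0,1]:=\{\operatorname{Var}<\infty\}$. $\rho_*(g,h):=\int_0^1|g-h|ds+|g(1)-h(1)|$.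 Metric $\rho_1'$: for $h\in D[0,1]$ set $h(0-):=0$, $\Gamma'h:=\{(t,x)\in[0,1]\times\mathbb R^d:x\in[h(t-),h(t)]\}$ ($[a,b]$ the segment), $\Pi'(h)$ the set of continuous bijections $\gamma:[0,1]\to\Gamma'h$ with $\gamma(0)=(0,0)$, and $\rho_1'(h_1,h_2):=\inf_{\gamma_i\in\Pi'(h_i)}\sup_t|\gamma_1(t)-\gamma_2(t)|$. $\inf\varnothing:=+\infty$. *)

theory Defs
  imports "HOL-Probability.Probability"
begin

definition Lmgf :: "'b measure \<Rightarrow> ('b \<Rightarrow> 'a::euclidean_space) \<Rightarrow> 'a \<Rightarrow> ennreal" where
  "Lmgf M X u = (\<integral>\<^sup>+ \<omega>. ennreal (exp (u \<bullet> X \<omega>)) \<partial>M)"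

definition DL :: "'b measure \<Rightarrow> ('b \<Rightarrow> 'a::euclidean_space) \<Rightarrow> 'a set" where
  "DL M X = {u. Lmgf M X u < \<infinity>}"

definition Kcum :: "'b measure \<Rightarrow> ('b \<Rightarrow> 'a::euclidean_space) \<Rightarrow> 'a \<Rightarrow> ereal" where
  "Kcum M X u = (if Lmgf M X u = \<infinity> then \<infinity> else ereal (ln (enn2real (Lmgf M X u))))"

definition Irate :: "'b measure \<Rightarrow> ('b \<Rightarrow> 'a::euclidean_space) \<Rightarrow> 'a \<Rightarrow> ereal" where
  "Irate M X v = (SUP u. ereal (u \<bullet> v) - Kcum M X u)"

definition cadlag01 :: "(real \<Rightarrow> 'a::euclidean_space) set" where
  "cadlag01 = {h. (\<forall>t\<in>{0..<1}. continuous (at_right t) h)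
               \<and> (\<forall>t\<in>{0<..1}. \<exists>l. (h \<longlongrightarrow> l) (at_left t))
               \<and> (\<forall>t. t \<notin> {0..1} \<longrightarrow> h t = 0)}"

definition lft :: "(real \<Rightarrow> 'a::euclidean_space) \<Rightarrow> real \<Rightarrow> 'a" where
  "lft h t = (if t = 0 then 0 else Lim (at_left t) h)"

text \<open>Admissible finite subsets t of (0,1], the sorted points of t \<union> {0,1},
  and the values of the polygonal interpolant h^t at these points.\<close>
definition fin_parts :: "real set set" where
  "fin_parts = {T. finite T \<and> T \<subseteq> {0<..1}}"

definition ppts :: "real set \<Rightarrow> real list" where
  "ppts T = sorted_list_of_set (insert 0 (insert 1 T))"

definition pval :: "(real \<Rightarrow> 'a::euclidean_space) \<Rightarrow> real \<Rightarrow> 'a" where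
  "pval h s = (if s = 0 then 0 else h s)"

text \<open>\<integral>_0^1 |(h^t)'| ds, written out for the piecewise linear h^t.\<close>
definition var_sum :: "(real \<Rightarrow> 'a::euclidean_space) \<Rightarrow> real set \<Rightarrow> real" where
  "var_sum h T = (let p = ppts T in
     \<Sum>i<length p - 1. norm (pval h (p ! Suc i) - pval h (p ! i)))"

definition Var :: "(real \<Rightarrow> 'a::euclidean_space) \<Rightarrow> ereal" where
  "Var h = (SUP T\<in>fin_parts. ereal (var_sum h T))"

definition BV01 :: "(real \<Rightarrow> 'a::euclidean_space) set" where
  "BV01 = {h \<in> cadlag01. Var h < \<infinity>}"

text \<open>\<integral>_0^1 I((h^t)') ds, written out for the piecewise linear h^t.\<close>
definition rate_sum :: "'b measure \<Rightarrow> ('b \<Rightarrow> 'a::euclidean_space) \<Rightarrow> (real \<Rightarrow> 'a) \<Rightarrow> real set \<Rightarrow> ereal" where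
  "rate_sum M X h T = (let p = ppts T in
     \<Sum>i<length p - 1. ereal (p ! Suc i - p ! i) *
        Irate M X ((pval h (p ! Suc i) - pval h (p ! i)) /\<^sub>R (p ! Suc i - p ! i)))"

definition ID :: "'b measure \<Rightarrow> ('b \<Rightarrow> 'a::euclidean_space) \<Rightarrow> (real \<Rightarrow> 'a) \<Rightarrow> ereal" where
  "ID M X h = (SUP T\<in>fin_parts. rate_sum M X h T)"

definition rho_star :: "(real \<Rightarrow> 'a::euclidean_space) \<Rightarrow> (real \<Rightarrow> 'a) \<Rightarrow> ereal" where
  "rho_star g h = ereal ((LINT s:{0..1}|lborel. norm (g s - h s)) + norm (g 1 - h 1))"

definition Gamma' :: "(real \<Rightarrow> 'a::euclidean_space) \<Rightarrow> (real \<times> 'a) set" where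
  "Gamma' h = {(t, x). t \<in> {0..1} \<and> x \<in> closed_segment (lft h t) (h t)}"

definition Pi' :: "(real \<Rightarrow> 'a::euclidean_space) \<Rightarrow> (real \<Rightarrow> real \<times> 'a) set" where
  "Pi' h = {\<gamma>. continuous_on {0..1} \<gamma> \<and> bij_betw \<gamma> {0..1} (Gamma' h) \<and> \<gamma> 0 = (0, 0)}"

definition rho1' :: "(real \<Rightarrow> 'a::euclidean_space) \<Rightarrow> (real \<Rightarrow> 'a) \<Rightarrow> ereal" where
  "rho1' h1 h2 = (INF p\<in>Pi' h1 \<times> Pi' h2. SUP t\<in>{0..1}. ereal (norm (fst p t - snd p t)))"

definition mclosure :: "('f \<Rightarrow> 'f \<Rightarrow> ereal) \<Rightarrow> 'f set \<Rightarrow> 'f set \<Rightarrow> 'f set" where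
  "mclosure \<rho> S B = {h \<in> S. \<forall>\<epsilon>>0. \<exists>g\<in>B. \<rho> g h < ereal \<epsilon>}"

definition mnbhd :: "('f \<Rightarrow> 'f \<Rightarrow> ereal) \<Rightarrow> 'f set \<Rightarrow> 'f set \<Rightarrow> real \<Rightarrow> 'f set" where
  "mnbhd \<rho> S B \<epsilon> = {h \<in> S. \<exists>g\<in>B. \<rho> g h < ereal \<epsilon>}"

end

theory Submission
  imports Defs "HOL-Library.Sublist" "HOL-Library.Diagonal_Subsequence"
begin

definition LV :: "(real \<Rightarrow> 'a::real_normed_vector) \<Rightarrow> real list \<Rightarrow> real" where
  "LV F xs = (\<Sum>i<length xs - 1. norm (F (xs ! Suc i) - F (xs ! i)))"

lemma LV_Nil[simp]: "LV F [] = 0" and LV_single[simp]: "LV F [x] = 0"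
  by (simp_all add: LV_def)

lemma LV_Cons2[simp]: "LV F (x # y # zs) = norm (F y - F x) + LV F (y # zs)"
  unfolding LV_def by (simp add: sum.lessThan_Suc_shift del: sum.lessThan_Suc)

lemma LV_nonneg: "0 \<le> LV F xs"
  unfolding LV_def by (intro sum_nonneg) auto

lemma LV_Cons_ge: "LV F xs \<le> LV F (z # xs)"
  by (cases xs) (auto)

lemma LV_subseq_gen: "subseq xs ys \<Longrightarrow> LV F (z # xs) \<le> LV F (z # ys)"
proof (induction xs ys arbitrary: z rule: list_emb.induct)
  case (list_emb_Nil ys)
  then show ?case using LV_nonneg[of F "z#ys"] by simp
next
  case (list_emb_Cons xs ys y)
  have 1: "LV F (z # xs) \<le> norm (F y - F z) + LV F (y # xs)"
  proof (cases xs)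
    case Nil then show ?thesis using LV_nonneg[of F "y#xs"] by simp
  next
    case (Cons a as)
    have "norm (F a - F z) \<le> norm (F y - F z) + norm (F a - F y)"
      using norm_triangle_ineq[of "F y - F z" "F a - F y"] by simp
    then show ?thesis using Cons by simp
  qed
  also have "\<dots> \<le> norm (F y - F z) + LV F (y # ys)" using list_emb_Cons by simp
  finally show ?case by simp
next
  case (list_emb_Cons2 x y xs ys)
  then show ?case by simp
qed

lemma LV_remdups_adj: "LV F (remdups_adj xs) = LV F xs"
proof (induction xs rule: remdups_adj.induct)
  case (3 x y xs)
  show ?case
  proof (cases "x = y")
    case True then show ?thesis using 3 by simp
  next
    case False
    then have "remdups_adj (x # y # xs) = x # remdups_adj (y # xs)" by simp
    also have "\<dots> = x # y # tl (remdups_adj (y # xs))" by (simp add: remdups_adj_Cons_alt)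
    finally have e: "remdups_adj (x # y # xs) = x # y # tl (remdups_adj (y # xs))" .
    have "LV F (remdups_adj (y # xs)) = LV F (y # xs)" using 3 False by simp
    then have "LV F (y # tl (remdups_adj (y # xs))) = LV F (y # xs)"
      by (simp add: remdups_adj_Cons_alt)
    then show ?thesis by (simp only: e LV_Cons2)
  qed
qed auto

lemma remdups_adj_hd: "remdups_adj (y # xs) = y # tl (remdups_adj (y # xs))"
  by (simp add: remdups_adj_Cons_alt)

lemma sorted_distinct_remdups_adj: "sorted xs \<Longrightarrow> distinct (remdups_adj xs)"
proof (induction xs rule: remdups_adj.induct)
  case (3 x y xs)
  show ?case
  proof (cases "x = y")
    case True then show ?thesis using 3 by simp
  next
    case False
    have "x \<le> y" using 3(3) by simp
    then have xy: "x < y" using False by simp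
    have d: "distinct (remdups_adj (y # xs))" using 3 False by simp
    have "\<forall>z\<in>set (remdups_adj (y # xs)). y \<le> z" using 3(3) by auto
    then have "x \<notin> set (remdups_adj (y # xs))" using xy by force
    then show ?thesis using False d by simp
  qed
qed auto

lemma sorted_subseq: 
  assumes "sorted xs" "distinct xs" "sorted ys" "distinct ys" "set xs \<subseteq> set ys"
  shows "subseq xs ys"
proof -
  have "filter (\<lambda>x. x \<in> set xs) ys = xs"
    by (rule sorted_distinct_set_unique) (use assms in \<open>auto simp: sorted_wrt_filter\<close>)
  then show ?thesis by (metis subseq_filter_left)
qed

lemma LV_sorted_mono:
  assumes "sorted xs" "sorted ys" "distinct ys" "set xs \<subseteq> set ys" "ys \<noteq> []"
  shows "LV F xs \<le> LV F ys"
proof -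
  obtain z zs where ys: "ys = z # zs" using assms(5) by (cases ys) auto
  let ?r = "remdups_adj xs"
  have "LV F xs = LV F ?r" by (simp add: LV_remdups_adj)
  also have "\<dots> \<le> LV F (z # ?r)" by (rule LV_Cons_ge)
  also have "\<dots> \<le> LV F (z # ys)"
    by (rule LV_subseq_gen, rule sorted_subseq)
       (use assms in \<open>auto simp: sorted_remdups_adj sorted_distinct_remdups_adj\<close>)
  also have "\<dots> = LV F ys" using ys by simp
  finally show ?thesis .
qed

lemma var_sum_LV: "var_sum h T = LV (pval h) (ppts T)"
  by (simp add: var_sum_def LV_def Let_def)

lemma ppts_props:
  assumes "T \<in> fin_parts"
  shows "sorted (ppts T)" "distinct (ppts T)" "set (ppts T) = insert 0 (insert 1 T)"
    "set (ppts T) \<subseteq> {0..1}" "\<exists>ys. ppts T = 0 # ys" "ppts T \<noteq> []"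
    "last (ppts T) = 1" "hd (ppts T) = 0" "length (ppts T) \<ge> 2"
proof -
  have fin: "finite T" "T \<subseteq> {0<..1}" using assms by (auto simp: fin_parts_def)
  let ?A = "insert (0::real) (insert 1 T)"
  show s: "sorted (ppts T)" "distinct (ppts T)" by (simp_all add: ppts_def)
  show st: "set (ppts T) = ?A" unfolding ppts_def using fin by (subst set_sorted_list_of_set) auto
  show "set (ppts T) \<subseteq> {0..1}" using fin st by auto
  have m: "Min ?A = 0" using fin by (intro Min_eqI) auto
  have "ppts T = Min ?A # sorted_list_of_set (?A - {Min ?A})" unfolding ppts_def
    by (rule sorted_list_of_set_nonempty) (use fin in auto)
  then show ex: "\<exists>ys. ppts T = 0 # ys" unfolding m by blast
  then show "ppts T \<noteq> []" "hd (ppts T) = 0" by auto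
  show "last (ppts T) = 1"
  proof -
    have ne: "ppts T \<noteq> []" using ex by auto
    have "last (ppts T) \<in> ?A" using st ne last_in_set by metis
    moreover have "1 \<le> last (ppts T)"
    proof -
      have "1 \<in> set (ppts T)" using st by auto
      then obtain i where i: "i < length (ppts T)" "ppts T ! i = 1" by (metis in_set_conv_nth)
      have "ppts T ! i \<le> ppts T ! (length (ppts T) - 1)"
        using s(1) i by (intro sorted_nth_mono) auto
      then show ?thesis using i ne by (simp add: last_conv_nth)
    qed
    ultimately show ?thesis using fin by auto
  qed
  have "card {0::real,1} \<le> card ?A" by (rule card_mono) (use fin in auto)
  then have "card (set (ppts T)) \<ge> 2" using st by simp
  then show "length (ppts T) \<ge> 2" by (metis card_length le_trans)
qed

lemma empty_fin_parts: "{} \<in> fin_parts" by (simp add: fin_parts_def)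

lemma fin_parts_of_list: "set xs \<subseteq> {0..1} \<Longrightarrow> set xs - {0} \<in> fin_parts"
  by (auto simp: fin_parts_def)

lemma ppts_of_list:
  assumes "sorted xs" "distinct xs" "set xs \<subseteq> {0..1}" "0 \<in> set xs" "1 \<in> set xs"
  shows "ppts (set xs - {0}) = xs"
proof -
  have "insert 0 (insert 1 (set xs - {0})) = set xs" using assms by auto
  then show ?thesis using assms unfolding ppts_def
    by (simp add: sorted_list_of_set_sort_remdups distinct_remdups_id sorted_sort_id)
qed

lemma LV_le_var_sum:
  assumes "sorted xs" "set xs \<subseteq> {0..1}"
  shows "LV (pval h) xs \<le> var_sum h (set xs - {0})"
proof -
  let ?T = "set xs - {0}"
  have T: "?T \<in> fin_parts" using assms(2) by (rule fin_parts_of_list)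
  show ?thesis unfolding var_sum_LV
    by (rule LV_sorted_mono) (use ppts_props[OF T] assms in auto)
qed

lemma var_sum_le_Var: "T \<in> fin_parts \<Longrightarrow> ereal (var_sum h T) \<le> Var h"
  unfolding Var_def by (rule SUP_upper)

lemma LV_le_Var:
  assumes "sorted xs" "set xs \<subseteq> {0..1}"
  shows "ereal (LV (pval h) xs) \<le> Var h"
  using LV_le_var_sum[OF assms, of h] var_sum_le_Var[OF fin_parts_of_list[OF assms(2)], of h]
  by (meson ereal_less_eq(3) order_trans)

definition BVS :: "(real \<Rightarrow> 'a::real_normed_vector) \<Rightarrow> real set \<Rightarrow> real \<Rightarrow> bool" where
  "BVS F S V \<longleftrightarrow> (\<forall>xs. sorted xs \<longrightarrow> set xs \<subseteq> S \<longrightarrow> LV F xs \<le> V)"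

lemma Var_BVS: "Var h \<le> ereal V \<Longrightarrow> BVS (pval h) {0..1} V"
  unfolding BVS_def using LV_le_Var by (metis ereal_less_eq(3) order_trans)

lemma BVS_Var: assumes "BVS (pval h) {0..1} V" shows "Var h \<le> ereal V"
  unfolding Var_def
proof (rule SUP_least)
  fix T assume T: "T \<in> fin_parts"
  show "ereal (var_sum h T) \<le> ereal V"
    using assms ppts_props[OF T] unfolding BVS_def var_sum_LV by auto
qed

lemma BVS_mono: "BVS F S V \<Longrightarrow> S' \<subseteq> S \<Longrightarrow> BVS F S' V"
  unfolding BVS_def by blast

lemma BVS_pair: "BVS F S V \<Longrightarrow> u \<in> S \<Longrightarrow> v \<in> S \<Longrightarrow> norm (F u - F v) \<le> V"
  unfolding BVS_def
  apply (cases "u \<le> v")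
   apply (drule spec[of _ "[u,v]"]) apply (simp add: norm_minus_commute)
  apply (drule spec[of _ "[v,u]"]) apply simp
  done

definition Jf :: "'b measure \<Rightarrow> ('b \<Rightarrow> 'a::euclidean_space) \<Rightarrow> real \<Rightarrow> 'a \<Rightarrow> ereal" where
  "Jf M X \<tau> x = ereal \<tau> * Irate M X (x /\<^sub>R \<tau>)"

definition RS :: "'b measure \<Rightarrow> ('b \<Rightarrow> 'a::euclidean_space) \<Rightarrow> (real \<Rightarrow> 'a) \<Rightarrow> real list \<Rightarrow> ereal" where
  "RS M X F xs = (\<Sum>i<length xs - 1. Jf M X (xs ! Suc i - xs ! i) (F (xs ! Suc i) - F (xs ! i)))"

lemma rate_sum_RS: "rate_sum M X h T = RS M X (pval h) (ppts T)"
  by (simp add: rate_sum_def RS_def Jf_def Let_def)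

lemma Irate_lower: "ereal (u \<bullet> v) - Kcum M X u \<le> Irate M X v"
  unfolding Irate_def by (rule SUP_upper) simp

lemma Kcum_fin: "u \<in> DL M X \<Longrightarrow> Kcum M X u = ereal (ln (enn2real (Lmgf M X u)))"
  by (simp add: Kcum_def DL_def)

lemma Kcum_0: assumes "prob_space M" shows "Kcum M X 0 = 0"
proof -
  have "Lmgf M X 0 = 1" unfolding Lmgf_def
    using prob_space.emeasure_space_1[OF assms] by simp
  then show ?thesis by (simp add: Kcum_def)
qed

lemma Irate_nonneg: assumes "prob_space M" shows "0 \<le> Irate M X v"
proof -
  have "Kcum M X 0 = 0" by (rule Kcum_0[OF assms])
  then show ?thesis using Irate_lower[of 0 v M X] by (simp add: zero_ereal_def)
qed

lemma Jf_nonneg: "prob_space M \<Longrightarrow> 0 \<le> \<tau> \<Longrightarrow> 0 \<le> Jf M X \<tau> x"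
  unfolding Jf_def by (simp add: Irate_nonneg)

lemma RS_nonneg: 
  assumes "prob_space M" "sorted xs" shows "0 \<le> RS M X F xs"
  unfolding RS_def
proof (rule sum_nonneg)
  fix i assume "i \<in> {..<length xs - 1}"
  then have "xs ! i \<le> xs ! Suc i" using assms(2) by (intro sorted_nth_mono) auto
  then show "0 \<le> Jf M X (xs ! Suc i - xs ! i) (F (xs ! Suc i) - F (xs ! i))"
    by (intro Jf_nonneg[OF assms(1)]) simp
qed

lemma ID_nonneg: assumes "prob_space M" shows "0 \<le> ID M X h"
proof -
  have "0 \<le> rate_sum M X h {}" unfolding rate_sum_RS
    using RS_nonneg[OF assms ppts_props(1)[OF empty_fin_parts]] .
  also have "\<dots> \<le> ID M X h" unfolding ID_def by (rule SUP_upper) (rule empty_fin_parts)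
  finally show ?thesis .
qed

lemma linear_growth:
  fixes M :: "'b measure" and X :: "'b \<Rightarrow> 'a::euclidean_space"
  assumes "0 \<in> interior (DL M X)"
  shows "\<exists>c>0. \<exists>C. \<forall>v. ereal (c * norm v - C) \<le> Irate M X v"
proof -
  obtain r where r: "r > 0" "ball 0 r \<subseteq> DL M X"
    using assms by (meson mem_interior)
  define \<rho> where "\<rho> = r / 2"
  have \<rho>: "\<rho> > 0" using r by (simp add: \<rho>_def)
  have inDL: "s *\<^sub>R (\<rho> *\<^sub>R b) \<in> DL M X" if "b \<in> Basis" "\<bar>s\<bar> = 1" for b s
  proof -
    have "norm (s *\<^sub>R (\<rho> *\<^sub>R b)) = \<rho>" using that \<rho> by (simp add: abs_mult)
    then show ?thesis using r \<rho> by (intro subsetD[OF r(2)]) (auto simp: \<rho>_def)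
  qed
  define k where "k u = ln (enn2real (Lmgf M X u))" for u
  define C where "C = (\<Sum>b\<in>Basis. \<bar>k (\<rho> *\<^sub>R b)\<bar> + \<bar>k ((-1) *\<^sub>R (\<rho> *\<^sub>R b))\<bar>)"
  have kC: "k (s *\<^sub>R (\<rho> *\<^sub>R b)) \<le> C" if "b \<in> Basis" "\<bar>s\<bar> = 1" for b s
  proof -
    have "k (s *\<^sub>R (\<rho> *\<^sub>R b)) \<le> \<bar>k (\<rho> *\<^sub>R b)\<bar> + \<bar>k ((-1) *\<^sub>R (\<rho> *\<^sub>R b))\<bar>"
      using that by (cases "s = 1") (auto simp: abs_if split: if_splits)
    also have "\<dots> \<le> C" unfolding C_def
      by (rule member_le_sum) (use that in auto)
    finally show ?thesis .
  qed
  define c where "c = \<rho> / real DIM('a)"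
  have c: "c > 0" using \<rho> by (simp add: c_def)
  have "ereal (c * norm v - C) \<le> Irate M X v" for v
  proof -
    have "\<exists>b\<in>Basis. norm v / real DIM('a) \<le> \<bar>v \<bullet> b\<bar>"
    proof (rule ccontr)
      assume "\<not> ?thesis"
      then have lt: "\<And>b. b \<in> Basis \<Longrightarrow> \<bar>v \<bullet> b\<bar> < norm v / real DIM('a)" by force
      have "(\<Sum>b\<in>Basis. \<bar>v \<bullet> b\<bar>) < (\<Sum>b\<in>(Basis::'a set). norm v / real DIM('a))"
        by (rule sum_strict_mono) (use lt in auto)
      also have "\<dots> = norm v" by simp
      finally show False using norm_le_l1[of v] by simp
    qed
    then obtain b where b: "b \<in> Basis" "norm v / real DIM('a) \<le> \<bar>v \<bullet> b\<bar>" by blast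
    define s where "s = (if v \<bullet> b \<ge> 0 then 1 else -1::real)"
    have s: "\<bar>s\<bar> = 1" by (simp add: s_def)
    define u where "u = s *\<^sub>R (\<rho> *\<^sub>R b)"
    have uv: "u \<bullet> v = \<rho> * \<bar>v \<bullet> b\<bar>"
      by (simp add: u_def s_def inner_commute abs_if)
    have "c * norm v \<le> u \<bullet> v" unfolding uv c_def using b \<rho>
      by (simp add: field_simps)
    moreover have "Kcum M X u = ereal (k u)"
      using Kcum_fin[OF inDL[OF b(1) s]] by (simp add: k_def u_def)
    moreover have "k u \<le> C" using kC[OF b(1) s] by (simp add: u_def)
    ultimately have "ereal (c * norm v - C) \<le> ereal (u \<bullet> v) - Kcum M X u" by simp
    also have "\<dots> \<le> Irate M X v" by (rule Irate_lower)
    finally show ?thesis .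
  qed
  then show ?thesis using c by blast
qed

lemma Jf_lower:
  assumes "\<forall>v. ereal (c * norm v - C) \<le> Irate M X v" "\<tau> > 0"
  shows "ereal (c * norm x - C * \<tau>) \<le> Jf M X \<tau> x"
proof -
  have "ereal (c * norm (x /\<^sub>R \<tau>) - C) \<le> Irate M X (x /\<^sub>R \<tau>)" using assms(1) by blast
  then have "ereal \<tau> * ereal (c * norm (x /\<^sub>R \<tau>) - C) \<le> ereal \<tau> * Irate M X (x /\<^sub>R \<tau>)"
    using assms by (intro ereal_mult_left_mono) auto
  moreover have "ereal \<tau> * ereal (c * norm (x /\<^sub>R \<tau>) - C) = ereal (c * norm x - C * \<tau>)"
    using assms(2) by (simp add: field_simps)
  ultimately show ?thesis by (simp add: Jf_def)
qed

lemma telescope_list: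
  fixes xs :: "real list" shows "(\<Sum>i<length xs - 1. xs ! Suc i - xs ! i) = (if xs = [] then 0 else last xs - hd xs)"
proof (cases xs)
  case Nil then show ?thesis by simp
next
  case (Cons a as)
  have "(\<Sum>i<length xs - 1. xs ! Suc i - xs ! i) = xs ! (length xs - 1) - xs ! 0"
    by (rule sum_lessThan_telescope[of "\<lambda>i. xs ! i"])
  then show ?thesis using Cons by (simp add: last_conv_nth hd_conv_nth)
qed

lemma RS_lower:
  assumes "\<forall>v. ereal (c * norm v - C) \<le> Irate M X v" "sorted_wrt (<) xs" "xs \<noteq> []"
  shows "ereal (c * LV F xs - C * (last xs - hd xs)) \<le> RS M X F xs"
proof -
  have tel: "(\<Sum>i<length xs - 1. xs ! Suc i - xs ! i) = last xs - hd xs"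
    using telescope_list[of xs] assms(3) by simp
  have gen: "(\<Sum>i\<in>I. c * a i - C * d i) = c * (\<Sum>i\<in>I. a i) - C * (\<Sum>i\<in>I. d i)"
    for I and a d :: "nat \<Rightarrow> real"
    by (simp add: sum_subtractf sum_distrib_left)
  have "ereal (c * LV F xs - C * (last xs - hd xs)) =
        ereal (\<Sum>i<length xs - 1. c * norm (F (xs ! Suc i) - F (xs ! i)) - C * (xs ! Suc i - xs ! i))"
    unfolding gen LV_def tel ..
  also have "\<dots> = (\<Sum>i<length xs - 1. ereal (c * norm (F (xs ! Suc i) - F (xs ! i)) - C * (xs ! Suc i - xs ! i)))"
    by (rule sum_ereal[symmetric])
  also have "\<dots> \<le> RS M X F xs" unfolding RS_def
  proof (rule sum_mono)
    fix i assume "i \<in> {..<length xs - 1}"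
    then have "xs ! i < xs ! Suc i" using assms(2) by (auto simp: sorted_wrt_iff_nth_less)
    then show "ereal (c * norm (F (xs ! Suc i) - F (xs ! i)) - C * (xs ! Suc i - xs ! i))
          \<le> Jf M X (xs ! Suc i - xs ! i) (F (xs ! Suc i) - F (xs ! i))"
      by (intro Jf_lower[OF assms(1)]) simp
  qed
  finally show ?thesis .
qed

lemma ID_Var_bound:
  assumes "\<forall>v. ereal (c * norm v - C) \<le> Irate M X v" "c > 0" "ID M X h \<le> ereal A"
  shows "Var h \<le> ereal ((A + C) / c)"
  unfolding Var_def
proof (rule SUP_least)
  fix T assume T: "T \<in> fin_parts"
  note pp = ppts_props[OF T]
  have "ereal (c * var_sum h T - C * 1) \<le> rate_sum M X h T"
    unfolding var_sum_LV rate_sum_RS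
    using RS_lower[OF assms(1), of "ppts T" "pval h"] pp by (simp add: strict_sorted_iff)
  also have "\<dots> \<le> ID M X h" unfolding ID_def using T by (rule SUP_upper)
  also have "\<dots> \<le> A" by fact
  finally have "c * var_sum h T - C \<le> A" by simp
  then show "ereal (var_sum h T) \<le> ereal ((A + C) / c)" using assms(2)
    by (simp add: field_simps)
qed

lemma Kcum_cases: "Kcum M X u = \<infinity> \<or> (\<exists>k. Kcum M X u = ereal k)"
  by (simp add: Kcum_def)

lemma Jf_SUP:
  assumes "\<tau> > 0"
  shows "Jf M X \<tau> x = (SUP u. ereal \<tau> * (ereal (u \<bullet> (x /\<^sub>R \<tau>)) - Kcum M X u))"
  unfolding Jf_def Irate_def using assms
  by (intro Sup_ereal_mult_left') auto

lemma Jf_term_le: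
  assumes "\<tau> > 0" "Kcum M X u = ereal k"
  shows "ereal (u \<bullet> x - \<tau> * k) \<le> Jf M X \<tau> x"
proof -
  have "ereal \<tau> * (ereal (u \<bullet> (x /\<^sub>R \<tau>)) - Kcum M X u) \<le> Jf M X \<tau> x"
    unfolding Jf_SUP[OF assms(1)] by (rule SUP_upper) simp
  moreover have "ereal \<tau> * (ereal (u \<bullet> (x /\<^sub>R \<tau>)) - Kcum M X u) = ereal (u \<bullet> x - \<tau> * k)"
    using assms by (simp add: field_simps inner_scaleR_right)
  ultimately show ?thesis by simp
qed

lemma Jf_lsc:
  assumes t: "t \<longlonglongrightarrow> \<tau>" "\<tau> > 0" and x: "x \<longlonglongrightarrow> y"
  shows "Jf M X \<tau> y \<le> liminf (\<lambda>k. Jf M X (t k) (x k))"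
  unfolding Jf_SUP[OF assms(2)]
proof (rule SUP_least)
  fix u
  show "ereal \<tau> * (ereal (u \<bullet> (y /\<^sub>R \<tau>)) - Kcum M X u) \<le> liminf (\<lambda>k. Jf M X (t k) (x k))"
  proof (cases "Kcum M X u = \<infinity>")
    case True then show ?thesis using assms(2) by simp
  next
    case False
    then obtain k where k: "Kcum M X u = ereal k" using Kcum_cases by blast
    have e: "ereal \<tau> * (ereal (u \<bullet> (y /\<^sub>R \<tau>)) - Kcum M X u) = ereal (u \<bullet> y - \<tau> * k)"
      using assms(2) k by (simp add: field_simps inner_scaleR_right)
    have lim: "(\<lambda>n. ereal (u \<bullet> x n - t n * k)) \<longlonglongrightarrow> ereal (u \<bullet> y - \<tau> * k)"
      by (intro tendsto_intros t x)
    have ev: "eventually (\<lambda>n. t n > 0) sequentially"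
      using t(1) assms(2) by (simp add: order_tendsto_iff)
    have "ereal (u \<bullet> y - \<tau> * k) = liminf (\<lambda>n. ereal (u \<bullet> x n - t n * k))"
      using lim by (intro lim_imp_Liminf[symmetric]) auto
    also have "\<dots> \<le> liminf (\<lambda>n. Jf M X (t n) (x n))"
      by (intro Liminf_mono eventually_mono[OF ev] Jf_term_le k)
    finally show ?thesis using e by simp
  qed
qed

lemma Liminf_sum_ge:
  fixes f :: "'i \<Rightarrow> nat \<Rightarrow> ereal"
  assumes "finite I" "\<And>i k. i \<in> I \<Longrightarrow> 0 \<le> f i k"
  shows "(\<Sum>i\<in>I. liminf (f i)) \<le> liminf (\<lambda>k. \<Sum>i\<in>I. f i k)"
  using assms
proof (induction I rule: finite_induct)
  case empty then show ?case by (simp add: Liminf_const)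
next
  case (insert j I)
  have "(\<Sum>i\<in>insert j I. liminf (f i)) = liminf (f j) + (\<Sum>i\<in>I. liminf (f i))"
    using insert by simp
  also have "\<dots> \<le> liminf (f j) + liminf (\<lambda>k. \<Sum>i\<in>I. f i k)"
    using insert by (intro add_left_mono) auto
  also have "\<dots> \<le> liminf (\<lambda>k. f j k + (\<Sum>i\<in>I. f i k))"
    using insert by (intro Liminf_add_le) (auto intro!: sum_nonneg always_eventually)
  also have "\<dots> = liminf (\<lambda>k. \<Sum>i\<in>insert j I. f i k)"
    using insert by simp
  finally show ?case .
qed

lemma RS_lsc:
  assumes PS: "prob_space M"
    and len: "\<And>k. length (ys k) = length p"
    and pts: "\<And>i. i < length p \<Longrightarrow> (\<lambda>k. ys k ! i) \<longlonglongrightarrow> p ! i"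
    and vals: "\<And>i. i < length p \<Longrightarrow> (\<lambda>k. F k (ys k ! i)) \<longlonglongrightarrow> G (p ! i)"
    and srt: "sorted_wrt (<) p" and srtk: "\<And>k. sorted (ys k)"
  shows "RS M X G p \<le> liminf (\<lambda>k. RS M X (F k) (ys k))"
proof -
  have "RS M X G p \<le> (\<Sum>i<length p - 1. liminf (\<lambda>k. Jf M X (ys k ! Suc i - ys k ! i) (F k (ys k ! Suc i) - F k (ys k ! i))))"
    unfolding RS_def
  proof (rule sum_mono)
    fix i assume i: "i \<in> {..<length p - 1}"
    then have "p ! i < p ! Suc i" using srt by (auto simp: sorted_wrt_iff_nth_less)
    then show "Jf M X (p ! Suc i - p ! i) (G (p ! Suc i) - G (p ! i))
      \<le> liminf (\<lambda>k. Jf M X (ys k ! Suc i - ys k ! i) (F k (ys k ! Suc i) - F k (ys k ! i)))"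
      using i by (intro Jf_lsc tendsto_intros pts vals) auto
  qed
  also have "\<dots> \<le> liminf (\<lambda>k. \<Sum>i<length p - 1. Jf M X (ys k ! Suc i - ys k ! i) (F k (ys k ! Suc i) - F k (ys k ! i)))"
  proof (rule Liminf_sum_ge)
    fix i k assume "i \<in> {..<length p - 1}"
    then have "ys k ! i \<le> ys k ! Suc i" using srtk[of k] len[of k] by (intro sorted_nth_mono) auto
    then show "0 \<le> Jf M X (ys k ! Suc i - ys k ! i) (F k (ys k ! Suc i) - F k (ys k ! i))"
      by (intro Jf_nonneg PS) simp
  qed simp
  also have "\<dots> = liminf (\<lambda>k. RS M X (F k) (ys k))"
    unfolding RS_def len ..
  finally show ?thesis .
qed

lemma LV_tendsto:
  assumes len: "\<And>k. length (ys k) = length p"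
    and vals: "\<And>i. i < length p \<Longrightarrow> (\<lambda>k. F k (ys k ! i)) \<longlonglongrightarrow> G (p ! i)"
  shows "(\<lambda>k. LV (F k) (ys k)) \<longlonglongrightarrow> LV G p"
  unfolding LV_def len by (intro tendsto_intros vals) auto

lemma LV_limit_le:
  assumes len: "\<And>k. length (ys k) = length p"
    and vals: "\<And>i. i < length p \<Longrightarrow> (\<lambda>k. F k (ys k ! i)) \<longlonglongrightarrow> G (p ! i)"
    and bd: "\<And>k. LV (F k) (ys k) \<le> V"
  shows "LV G p \<le> V"
  using LV_tendsto[of ys p F G, OF len vals] bd by (meson LIMSEQ_le_const2)

lemma liminf_le_lim:
  fixes a :: "nat \<Rightarrow> ereal"
  assumes "\<And>k. a k \<le> ereal (L + e k)" "e \<longlonglongrightarrow> 0"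
  shows "liminf a \<le> ereal L"
proof -
  have "liminf a \<le> liminf (\<lambda>k. ereal (L + e k))" by (intro Liminf_mono) (use assms in auto)
  also have "\<dots> = ereal L"
    by (intro lim_imp_Liminf) (use assms(2) in \<open>auto intro!: tendsto_intros tendsto_eq_intros\<close>)
  finally show ?thesis .
qed

lemma LV_snoc2: "LV F xs + norm (F b - F a) \<le> LV F (xs @ [a, b])"
proof (induction xs rule: induct_list012)
  case 1 then show ?case by simp
next
  case (2 x) then show ?case by simp
next
  case (3 x y zs)
  then show ?case by simp
qed

lemma LV_cons2_ge: "norm (F b - F a) + LV F xs \<le> LV F (a # b # xs)"
  using LV_Cons_ge[of F xs b] by simp

lemma right_limit_exists:
  fixes F :: "real \<Rightarrow> 'a::euclidean_space"
  assumes BV: "BVS F S V" and d0: "\<delta>0 > 0"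
    and dense: "\<And>a b. t \<le> a \<Longrightarrow> a < b \<Longrightarrow> b \<le> t + \<delta>0 \<Longrightarrow> \<exists>s\<in>S. a < s \<and> s < b"
  shows "\<exists>l. (F \<longlongrightarrow> l) (at t within (S \<inter> {t<..}))"
proof -
  have cauchy: "\<exists>\<delta>>0. \<delta> \<le> \<delta>0 \<and> (\<forall>q\<in>S. \<forall>q'\<in>S. t < q \<and> q < t + \<delta> \<and> t < q' \<and> q' < t + \<delta> \<longrightarrow> norm (F q - F q') \<le> \<epsilon>)"
    if \<epsilon>: "\<epsilon> > 0" for \<epsilon>
  proof (rule ccontr)
    assume "\<not> ?thesis"
    then have bad: "\<And>\<delta>. 0 < \<delta> \<Longrightarrow> \<delta> \<le> \<delta>0 \<Longrightarrow> \<exists>q\<in>S. \<exists>q'\<in>S. t < q \<and> q < t + \<delta> \<and> t < q' \<and> q' < t + \<delta> \<and> norm (F q - F q') > \<epsilon>"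
      by (meson not_le)
    have "\<forall>\<delta>. 0 < \<delta> \<longrightarrow> \<delta> \<le> \<delta>0 \<longrightarrow> (\<exists>xs. sorted xs \<and> set xs \<subseteq> S \<inter> {t<..<t+\<delta>} \<and> real n * \<epsilon> \<le> LV F xs)" for n
    proof (induction n)
      case 0 then show ?case by (auto intro!: exI[of _ "[]"])
    next
      case (Suc n)
      show ?case
      proof (intro allI impI)
        fix \<delta> :: real assume \<delta>: "0 < \<delta>" "\<delta> \<le> \<delta>0"
        obtain q q' where qq: "q \<in> S" "q' \<in> S" "t < q" "q < t + \<delta>" "t < q'" "q' < t + \<delta>" "norm (F q - F q') > \<epsilon>"
          using bad[OF \<delta>] by blast
        define a where "a = min q q'"
        define b where "b = max q q'"
        have ab: "norm (F b - F a) > \<epsilon>" using qq(7)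
          by (cases "q \<le> q'") (auto simp: a_def b_def norm_minus_commute min_def max_def)
        obtain xs where xs: "sorted xs" "set xs \<subseteq> S \<inter> {t<..<t+(a-t)}" "real n * \<epsilon> \<le> LV F xs"
        proof -
          have "0 < a - t" "a - t \<le> \<delta>0" using qq \<delta> by (auto simp: a_def min_def)
          then show ?thesis using Suc that by blast
        qed
        have "\<forall>x\<in>set xs. x \<le> a" using xs(2) by auto
        then have "sorted (xs @ [a, b])" using xs by (auto simp: sorted_append a_def b_def)
        moreover have "set (xs @ [a, b]) \<subseteq> S \<inter> {t<..<t+\<delta>}"
        proof -
          have "\<forall>x\<in>set xs. t < x \<and> x < a" using xs(2) by auto
          moreover have "a < t + \<delta>" "b < t + \<delta>" "t < a" "t < b" "a \<in> S" "b \<in> S"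
            using qq by (auto simp: a_def b_def min_def max_def)
          ultimately show ?thesis using xs(2) by fastforce
        qed
        moreover have "real (Suc n) * \<epsilon> \<le> LV F (xs @ [a, b])"
          using LV_snoc2[of F xs b a] xs(3) ab by (simp add: algebra_simps)
        ultimately show "\<exists>xs. sorted xs \<and> set xs \<subseteq> S \<inter> {t<..<t+\<delta>} \<and> real (Suc n) * \<epsilon> \<le> LV F xs"
          by blast
      qed
    qed
    moreover obtain n :: nat where n: "V / \<epsilon> < n" using reals_Archimedean2 by blast
    ultimately obtain xs where xs: "sorted xs" "set xs \<subseteq> S" "real n * \<epsilon> \<le> LV F xs"
      using d0 by blast
    have "LV F xs \<le> V" using BV xs unfolding BVS_def by blast
    moreover have "V < real n * \<epsilon>" using n \<epsilon> by (simp add: field_simps)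
    ultimately show False using xs(3) by simp
  qed
  have "\<exists>r. r \<in> S \<and> t < r \<and> r < t + min \<delta>0 (1 / Suc k)" for k
    using dense[of t "t + min \<delta>0 (1 / Suc k)"] d0 by auto
  then obtain r where r: "\<And>k. r k \<in> S" "\<And>k. t < r k" "\<And>k. r k < t + min \<delta>0 (1 / Suc k)"
    by metis
  have rlim: "r \<longlonglongrightarrow> t"
  proof (rule tendsto_sandwich[of "\<lambda>_. t" _ _ "\<lambda>k. t + 1 / Suc k"])
    show "\<forall>\<^sub>F n in sequentially. t \<le> r n" using r(2) by (simp add: less_imp_le)
    show "\<forall>\<^sub>F n in sequentially. r n \<le> t + 1 / real (Suc n)"
    proof (intro always_eventually allI)
      fix n show "r n \<le> t + 1 / real (Suc n)" using r(3)[of n] by (simp add: min_def split: if_splits)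
    qed
    show "(\<lambda>n. t + 1 / real (Suc n)) \<longlonglongrightarrow> t"
      using tendsto_add[OF tendsto_const LIMSEQ_inverse_real_of_nat, of t] by (simp add: inverse_eq_divide)
  qed simp
  have evr: "eventually (\<lambda>k. r k < t + \<delta>) sequentially" if "\<delta> > 0" for \<delta>
  proof -
    have "eventually (\<lambda>k. r k < t + \<delta>) sequentially"
      using rlim that by (simp add: order_tendsto_iff)
    then show ?thesis .
  qed
  have "Cauchy (\<lambda>k. F (r k))"
  proof (rule metric_CauchyI)
    fix \<epsilon> :: real assume "\<epsilon> > 0"
    then obtain \<delta> where \<delta>: "\<delta> > 0" "\<forall>q\<in>S. \<forall>q'\<in>S. t < q \<and> q < t + \<delta> \<and> t < q' \<and> q' < t + \<delta> \<longrightarrow> norm (F q - F q') \<le> \<epsilon>/2"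
      using cauchy[of "\<epsilon>/2"] by auto
    obtain M where M: "\<And>k. k \<ge> M \<Longrightarrow> r k < t + \<delta>" using evr[OF \<delta>(1)] by (auto simp: eventually_sequentially)
    show "\<exists>M. \<forall>m\<ge>M. \<forall>n\<ge>M. dist (F (r m)) (F (r n)) < \<epsilon>"
    proof (intro exI allI impI)
      fix m n assume "m \<ge> M" "n \<ge> M"
      then have "norm (F (r m) - F (r n)) \<le> \<epsilon>/2" using \<delta>(2) M r by blast
      then show "dist (F (r m)) (F (r n)) < \<epsilon>" using \<open>\<epsilon> > 0\<close> by (simp add: dist_norm)
    qed
  qed
  then obtain l where l: "(\<lambda>k. F (r k)) \<longlonglongrightarrow> l" using Cauchy_convergent_iff convergent_def by blast
  have "(F \<longlongrightarrow> l) (at t within (S \<inter> {t<..}))"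
  proof (rule tendstoI)
    fix \<epsilon> :: real assume "\<epsilon> > 0"
    then obtain \<delta> where \<delta>: "\<delta> > 0" "\<forall>q\<in>S. \<forall>q'\<in>S. t < q \<and> q < t + \<delta> \<and> t < q' \<and> q' < t + \<delta> \<longrightarrow> norm (F q - F q') \<le> \<epsilon>/2"
      using cauchy[of "\<epsilon>/2"] by auto
    show "\<forall>\<^sub>F x in at t within S \<inter> {t<..}. dist (F x) l < \<epsilon>"
      unfolding eventually_at
    proof (intro exI[of _ \<delta>] conjI ballI impI)
      fix s assume s: "s \<in> S \<inter> {t<..}" "s \<noteq> t \<and> dist s t < \<delta>"
      have "eventually (\<lambda>k. norm (F s - F (r k)) \<le> \<epsilon>/2) sequentially"
        using evr[OF \<delta>(1)] by eventually_elim (use s \<delta>(2) r in \<open>auto simp: dist_real_def\<close>)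
      moreover have "(\<lambda>k. norm (F s - F (r k))) \<longlonglongrightarrow> norm (F s - l)"
        by (intro tendsto_intros l)
      ultimately have "norm (F s - l) \<le> \<epsilon>/2" by (meson LIMSEQ_le_const2 eventually_sequentially)
      then show "dist (F s) l < \<epsilon>" using \<open>\<epsilon> > 0\<close> by (simp add: dist_norm)
    qed (use \<delta> in auto)
  qed
  then show ?thesis by blast
qed

lemma left_limit_exists:
  fixes F :: "real \<Rightarrow> 'a::euclidean_space"
  assumes BV: "BVS F S V" and d0: "\<delta>0 > 0"
    and dense: "\<And>a b. t - \<delta>0 \<le> a \<Longrightarrow> a < b \<Longrightarrow> b \<le> t \<Longrightarrow> \<exists>s\<in>S. a < s \<and> s < b"
  shows "\<exists>l. (F \<longlongrightarrow> l) (at t within (S \<inter> {..<t}))"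
proof -
  have cauchy: "\<exists>\<delta>>0. \<delta> \<le> \<delta>0 \<and> (\<forall>q\<in>S. \<forall>q'\<in>S. t - \<delta> < q \<and> q < t \<and> t - \<delta> < q' \<and> q' < t \<longrightarrow> norm (F q - F q') \<le> \<epsilon>)"
    if \<epsilon>: "\<epsilon> > 0" for \<epsilon>
  proof (rule ccontr)
    assume "\<not> ?thesis"
    then have bad: "\<And>\<delta>. 0 < \<delta> \<Longrightarrow> \<delta> \<le> \<delta>0 \<Longrightarrow> \<exists>q\<in>S. \<exists>q'\<in>S. t - \<delta> < q \<and> q < t \<and> t - \<delta> < q' \<and> q' < t \<and> norm (F q - F q') > \<epsilon>"
      by (meson not_le)
    have "\<forall>\<delta>. 0 < \<delta> \<longrightarrow> \<delta> \<le> \<delta>0 \<longrightarrow> (\<exists>xs. sorted xs \<and> set xs \<subseteq> S \<inter> {t-\<delta><..<t} \<and> real n * \<epsilon> \<le> LV F xs)" for n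
    proof (induction n)
      case 0 then show ?case by (auto intro!: exI[of _ "[]"])
    next
      case (Suc n)
      show ?case
      proof (intro allI impI)
        fix \<delta> :: real assume \<delta>: "0 < \<delta>" "\<delta> \<le> \<delta>0"
        obtain q q' where qq: "q \<in> S" "q' \<in> S" "t - \<delta> < q" "q < t" "t - \<delta> < q'" "q' < t" "norm (F q - F q') > \<epsilon>"
          using bad[OF \<delta>] by blast
        define a where "a = min q q'"
        define b where "b = max q q'"
        have ab: "norm (F b - F a) > \<epsilon>" using qq(7)
          by (cases "q \<le> q'") (auto simp: a_def b_def norm_minus_commute min_def max_def)
        obtain xs where xs: "sorted xs" "set xs \<subseteq> S \<inter> {t-(t-b)<..<t}" "real n * \<epsilon> \<le> LV F xs"
        proof -
          have "0 < t - b" "t - b \<le> \<delta>0" using qq \<delta> by (auto simp: b_def max_def)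
          then show ?thesis using Suc that by blast
        qed
        have "\<forall>x\<in>set xs. b \<le> x" using xs(2) by auto
        then have "sorted (a # b # xs)" using xs by (auto simp: a_def b_def)
        moreover have "set (a # b # xs) \<subseteq> S \<inter> {t-\<delta><..<t}"
        proof -
          have "\<forall>x\<in>set xs. b < x \<and> x < t" using xs(2) by auto
          moreover have "a < t" "b < t" "t - \<delta> < a" "t - \<delta> < b" "a \<in> S" "b \<in> S"
            using qq by (auto simp: a_def b_def min_def max_def)
          ultimately show ?thesis using xs(2) by fastforce
        qed
        moreover have "real (Suc n) * \<epsilon> \<le> LV F (a # b # xs)"
          using LV_cons2_ge[of F b a xs] xs(3) ab by (simp add: algebra_simps)
        ultimately show "\<exists>xs. sorted xs \<and> set xs \<subseteq> S \<inter> {t-\<delta><..<t} \<and> real (Suc n) * \<epsilon> \<le> LV F xs"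
          by blast
      qed
    qed
    moreover obtain n :: nat where n: "V / \<epsilon> < n" using reals_Archimedean2 by blast
    ultimately obtain xs where xs: "sorted xs" "set xs \<subseteq> S" "real n * \<epsilon> \<le> LV F xs"
      using d0 by blast
    have "LV F xs \<le> V" using BV xs unfolding BVS_def by blast
    moreover have "V < real n * \<epsilon>" using n \<epsilon> by (simp add: field_simps)
    ultimately show False using xs(3) by simp
  qed
  have "\<exists>r. r \<in> S \<and> t - min \<delta>0 (1 / Suc k) < r \<and> r < t" for k
    using dense[of "t - min \<delta>0 (1 / Suc k)" t] d0 by auto
  then obtain r where r: "\<And>k. r k \<in> S" "\<And>k. r k < t" "\<And>k. t - min \<delta>0 (1 / Suc k) < r k"
    by metis
  have rlim: "r \<longlonglongrightarrow> t"
  proof (rule tendsto_sandwich[of "\<lambda>k. t - 1 / Suc k" _ _ "\<lambda>_. t"])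
    show "\<forall>\<^sub>F n in sequentially. r n \<le> t" using r(2) by (simp add: less_imp_le)
    show "\<forall>\<^sub>F n in sequentially. t - 1 / real (Suc n) \<le> r n"
    proof (intro always_eventually allI)
      fix n show "t - 1 / real (Suc n) \<le> r n" using r(3)[of n] by (simp add: min_def split: if_splits)
    qed
    show "(\<lambda>n. t - 1 / real (Suc n)) \<longlonglongrightarrow> t"
      using tendsto_diff[OF tendsto_const LIMSEQ_inverse_real_of_nat, of t] by (simp add: inverse_eq_divide)
  qed simp
  have evr: "eventually (\<lambda>k. t - \<delta> < r k) sequentially" if "\<delta> > 0" for \<delta>
  proof -
    have "eventually (\<lambda>k. t - \<delta> < r k) sequentially"
      using rlim that by (simp add: order_tendsto_iff)
    then show ?thesis .
  qed
  have "Cauchy (\<lambda>k. F (r k))"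
  proof (rule metric_CauchyI)
    fix \<epsilon> :: real assume "\<epsilon> > 0"
    then obtain \<delta> where \<delta>: "\<delta> > 0" "\<forall>q\<in>S. \<forall>q'\<in>S. t - \<delta> < q \<and> q < t \<and> t - \<delta> < q' \<and> q' < t \<longrightarrow> norm (F q - F q') \<le> \<epsilon>/2"
      using cauchy[of "\<epsilon>/2"] by auto
    obtain M where M: "\<And>k. k \<ge> M \<Longrightarrow> t - \<delta> < r k" using evr[OF \<delta>(1)] by (auto simp: eventually_sequentially)
    show "\<exists>M. \<forall>m\<ge>M. \<forall>n\<ge>M. dist (F (r m)) (F (r n)) < \<epsilon>"
    proof (intro exI allI impI)
      fix m n assume "m \<ge> M" "n \<ge> M"
      then have "norm (F (r m) - F (r n)) \<le> \<epsilon>/2" using \<delta>(2) M r by blast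
      then show "dist (F (r m)) (F (r n)) < \<epsilon>" using \<open>\<epsilon> > 0\<close> by (simp add: dist_norm)
    qed
  qed
  then obtain l where l: "(\<lambda>k. F (r k)) \<longlonglongrightarrow> l" using Cauchy_convergent_iff convergent_def by blast
  have "(F \<longlongrightarrow> l) (at t within (S \<inter> {..<t}))"
  proof (rule tendstoI)
    fix \<epsilon> :: real assume "\<epsilon> > 0"
    then obtain \<delta> where \<delta>: "\<delta> > 0" "\<forall>q\<in>S. \<forall>q'\<in>S. t - \<delta> < q \<and> q < t \<and> t - \<delta> < q' \<and> q' < t \<longrightarrow> norm (F q - F q') \<le> \<epsilon>/2"
      using cauchy[of "\<epsilon>/2"] by auto
    show "\<forall>\<^sub>F x in at t within S \<inter> {..<t}. dist (F x) l < \<epsilon>"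
      unfolding eventually_at
    proof (intro exI[of _ \<delta>] conjI ballI impI)
      fix s assume s: "s \<in> S \<inter> {..<t}" "s \<noteq> t \<and> dist s t < \<delta>"
      have "eventually (\<lambda>k. norm (F s - F (r k)) \<le> \<epsilon>/2) sequentially"
        using evr[OF \<delta>(1)] by eventually_elim (use s \<delta>(2) r in \<open>auto simp: dist_real_def\<close>)
      moreover have "(\<lambda>k. norm (F s - F (r k))) \<longlonglongrightarrow> norm (F s - l)"
        by (intro tendsto_intros l)
      ultimately have "norm (F s - l) \<le> \<epsilon>/2" by (meson LIMSEQ_le_const2 eventually_sequentially)
      then show "dist (F s) l < \<epsilon>" using \<open>\<epsilon> > 0\<close> by (simp add: dist_norm)
    qed (use \<delta> in auto)
  qed
  then show ?thesis by blast
qed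

lemma seg_cball:
  fixes a b c :: "'a::euclidean_space"
  assumes "x \<in> closed_segment a b" "norm (a - c) \<le> e" "norm (b - c) \<le> e"
  shows "norm (x - c) \<le> e"
proof -
  have "closed_segment a b \<subseteq> cball c e"
    by (rule closed_segment_subset) (use assms in \<open>auto simp: dist_norm norm_minus_commute\<close>)
  then show ?thesis using assms(1) by (auto simp: dist_norm norm_minus_commute)
qed

lemma cadlag_left_lim:
  assumes "h \<in> cadlag01" "0 < t" "t \<le> 1"
  shows "(h \<longlongrightarrow> lft h t) (at_left t)"
proof -
  have "\<exists>l. (h \<longlongrightarrow> l) (at_left t)" using assms unfolding cadlag01_def by auto
  then obtain l where l: "(h \<longlongrightarrow> l) (at_left t)" by blast
  then have "lft h t = l" using assms(2) unfolding lft_def by (simp add: tendsto_Lim)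
  then show ?thesis using l by simp
qed

lemma lft_bound:
  assumes "h \<in> cadlag01" "0 < t" "t \<le> 1" "\<eta> > 0"
    and "\<And>u. t - \<eta> < u \<Longrightarrow> u < t \<Longrightarrow> norm (h u - c) \<le> e"
  shows "norm (lft h t - c) \<le> e"
proof -
  have "lft h t \<in> cball c e"
  proof (rule Lim_in_closed_set[OF closed_cball _ _ cadlag_left_lim[OF assms(1-3)]])
    show "\<forall>\<^sub>F x in at_left t. h x \<in> cball c e"
      by (rule eventually_mono[OF eventually_at_left_real[of "t - \<eta>" t]])
         (use assms in \<open>auto simp: dist_norm norm_minus_commute\<close>)
  qed simp
  then show ?thesis by (simp add: dist_norm norm_minus_commute)
qed

lemma endpoint:
  fixes h :: "real \<Rightarrow> 'a::euclidean_space"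
  assumes hc: "h \<in> cadlag01" and g: "\<gamma> \<in> Pi' h"
  shows "\<gamma> 1 = (1, h 1)"
proof -
  let ?G = "Gamma' h"
  have cont: "continuous_on {0..1} \<gamma>" and bij: "bij_betw \<gamma> {0..1} ?G" and g0: "\<gamma> 0 = (0, 0)"
    using g by (auto simp: Pi'_def)
  obtain gi where hom: "homeomorphism {0..1} ?G \<gamma> gi"
    using homeomorphism_compact[OF compact_Icc cont] bij by (auto simp: bij_betw_def)
  have gi_cont: "continuous_on ?G gi" using hom by (simp add: homeomorphism_def)
  have gi_img: "gi ` ?G = {0..1}" and gi_inv: "\<And>x. x \<in> ?G \<Longrightarrow> \<gamma> (gi x) = x"
    and gi_inv2: "\<And>x. x \<in> {0..1} \<Longrightarrow> gi (\<gamma> x) = x"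
    using hom by (auto simp: homeomorphism_def)
  define \<pi> where "\<pi> \<tau> = fst (\<gamma> \<tau>)" for \<tau>
  have \<pi>c: "continuous_on {0..1} \<pi>" unfolding \<pi>_def by (intro continuous_on_fst cont)
  have inG: "\<gamma> \<tau> \<in> ?G" if "\<tau> \<in> {0..1}" for \<tau> using bij that by (auto simp: bij_betw_def)
  have \<pi>01: "\<pi> \<tau> \<in> {0..1}" if "\<tau> \<in> {0..1}" for \<tau>
    using inG[OF that] by (auto simp: \<pi>_def Gamma'_def split: prod.splits)
  have snd_seg: "snd (\<gamma> \<tau>) \<in> closed_segment (lft h (\<pi> \<tau>)) (h (\<pi> \<tau>))" if "\<tau> \<in> {0..1}" for \<tau>
    using inG[OF that] by (auto simp: \<pi>_def Gamma'_def split: prod.splits)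
  have \<pi>0: "\<pi> 0 = 0" using g0 by (simp add: \<pi>_def)
  have hit: "\<exists>\<tau>\<in>{0..1}. \<gamma> \<tau> = p" if "p \<in> ?G" for p
    using bij that unfolding bij_betw_def by (force simp: image_iff)
  have fib_conn: "connected {\<tau> \<in> {0..1}. \<pi> \<tau> = t}" if t: "t \<in> {0..1}" for t
  proof -
    let ?S = "(\<lambda>x. (t, x)) ` closed_segment (lft h t) (h t)"
    have SG: "?S \<subseteq> ?G" using t by (auto simp: Gamma'_def)
    have "connected ?S" by (intro connected_continuous_image continuous_intros) simp
    then have "connected (gi ` ?S)"
      by (rule connected_continuous_image[rotated]) (rule continuous_on_subset[OF gi_cont SG])
    moreover have "gi ` ?S = {\<tau> \<in> {0..1}. \<pi> \<tau> = t}"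
    proof (intro equalityI subsetI)
      fix \<tau> assume "\<tau> \<in> gi ` ?S"
      then obtain x where x: "x \<in> closed_segment (lft h t) (h t)" "\<tau> = gi (t, x)" by auto
      then have "(t, x) \<in> ?G" using SG by auto
      then show "\<tau> \<in> {\<tau> \<in> {0..1}. \<pi> \<tau> = t}" using x gi_img gi_inv by (auto simp: \<pi>_def)
    next
      fix \<tau> assume \<tau>: "\<tau> \<in> {\<tau> \<in> {0..1}. \<pi> \<tau> = t}"
      then have "\<gamma> \<tau> = (t, snd (\<gamma> \<tau>))" by (simp add: \<pi>_def prod_eq_iff)
      moreover have "snd (\<gamma> \<tau>) \<in> closed_segment (lft h t) (h t)" using snd_seg \<tau> by auto
      ultimately have "\<gamma> \<tau> \<in> ?S" by (metis image_eqI)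
      then have "gi (\<gamma> \<tau>) \<in> gi ` ?S" by (rule imageI)
      then show "\<tau> \<in> gi ` ?S" using gi_inv2 \<tau> by simp
    qed
    ultimately show ?thesis by simp
  qed
  have mono: "\<pi> a \<le> \<pi> b" if ab: "0 \<le> a" "a \<le> b" "b \<le> 1" for a b
  proof (rule ccontr)
    assume "\<not> \<pi> a \<le> \<pi> b"
    then have lt: "\<pi> b < \<pi> a" by simp
    define v where "v = (\<pi> a + \<pi> b) / 2"
    have v: "\<pi> b < v" "v < \<pi> a" using lt by (auto simp: v_def)
    have pb: "0 \<le> \<pi> b" using \<pi>01[of b] ab by auto
    have "\<exists>x\<ge>0. x \<le> a \<and> \<pi> x = v"
    proof (rule IVT')
      show "\<pi> 0 \<le> v" using \<pi>0 pb v by simp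
      show "v \<le> \<pi> a" using v by simp
      show "0 \<le> a" by fact
      show "continuous_on {0..a} \<pi>" by (rule continuous_on_subset[OF \<pi>c]) (use ab in auto)
    qed
    then obtain c where c: "0 \<le> c" "c \<le> a" "\<pi> c = v" by blast
    have "\<exists>x\<ge>a. x \<le> b \<and> \<pi> x = v"
    proof (rule IVT2')
      show "\<pi> b \<le> v" using v by simp
      show "v \<le> \<pi> a" using v by simp
      show "a \<le> b" by fact
      show "continuous_on {a..b} \<pi>" by (rule continuous_on_subset[OF \<pi>c]) (use ab in auto)
    qed
    then obtain c' where c': "a \<le> c'" "c' \<le> b" "\<pi> c' = v" by blast
    have vv: "v \<in> {0..1}" using \<pi>01[of a] v pb ab by auto
    have cU: "c \<in> {\<tau> \<in> {0..1}. \<pi> \<tau> = v}" using c ab by auto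
    have c'U: "c' \<in> {\<tau> \<in> {0..1}. \<pi> \<tau> = v}" using c' ab by auto
    have "a \<in> {\<tau> \<in> {0..1}. \<pi> \<tau> = v}"
      using fib_conn[OF vv] unfolding connected_iff_interval
      using cU c'U c(2) c'(1) by blast
    then show False using v by simp
  qed
  obtain \<tau>h where \<tau>h: "\<tau>h \<in> {0..1}" "\<gamma> \<tau>h = (1, h 1)"
    using hit[of "(1, h 1)"] by (auto simp: Gamma'_def)
  have \<pi>1: "\<pi> 1 = 1"
  proof -
    have "\<pi> \<tau>h \<le> \<pi> 1" by (rule mono) (use \<tau>h in auto)
    moreover have "\<pi> \<tau>h = 1" using \<tau>h(2) by (simp add: \<pi>_def)
    moreover have "\<pi> 1 \<le> 1" using \<pi>01[of 1] by simp
    ultimately show ?thesis by linarith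
  qed
  define Fb where "Fb = {\<tau> \<in> {0..1}. \<pi> \<tau> = 1}"
  have Fb_closed: "closed Fb" unfolding Fb_def
    by (rule continuous_closed_preimage_constant[OF \<pi>c]) simp
  have Fb_ne: "1 \<in> Fb" using \<pi>1 by (simp add: Fb_def)
  define \<tau>1 where "\<tau>1 = Inf Fb"
  have bdd: "bdd_below Fb" unfolding Fb_def by (rule bdd_belowI[of _ 0]) auto
  have \<tau>1F: "\<tau>1 \<in> Fb" unfolding \<tau>1_def
    using closed_contains_Inf[OF _ bdd Fb_closed] Fb_ne by blast
  have \<tau>1le: "\<tau>1 \<le> \<tau>" if "\<tau> \<in> Fb" for \<tau> unfolding \<tau>1_def using that bdd by (rule cInf_lower)
  have \<tau>1pos: "0 < \<tau>1" using \<tau>1F \<pi>0 by (auto simp: Fb_def less_le)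
  have \<tau>1_le1: "\<tau>1 \<le> 1" using \<tau>1F by (auto simp: Fb_def)
  have Fb_eq: "Fb = {\<tau>1..1}"
  proof
    show "Fb \<subseteq> {\<tau>1..1}" using \<tau>1le by (auto simp: Fb_def)
    show "{\<tau>1..1} \<subseteq> Fb"
    proof
      fix x assume x: "x \<in> {\<tau>1..1}"
      have "connected Fb" unfolding Fb_def by (rule fib_conn) simp
      then have ci: "\<forall>a\<in>Fb. \<forall>b\<in>Fb. \<forall>z\<ge>a. z \<le> b \<longrightarrow> z \<in> Fb" by (simp only: connected_iff_interval)
      show "x \<in> Fb" using ci[rule_format, OF \<tau>1F Fb_ne] x by simp
    qed
  qed
  have below: "\<pi> \<tau> < 1" if "0 \<le> \<tau>" "\<tau> < \<tau>1" for \<tau>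
  proof -
    have "\<pi> \<tau> \<le> 1" using \<pi>01[of \<tau>] that \<tau>1_le1 by auto
    moreover have "\<pi> \<tau> \<noteq> 1"
    proof
      assume "\<pi> \<tau> = 1"
      then have "\<tau> \<in> Fb" using that \<tau>1_le1 by (simp add: Fb_def)
      then show False using \<tau>1le that by fastforce
    qed
    ultimately show ?thesis by simp
  qed
  define hl where "hl = lft h 1"
  have left1: "(h \<longlongrightarrow> hl) (at_left 1)" unfolding hl_def by (rule cadlag_left_lim[OF hc]) auto
  have g\<tau>1: "\<gamma> \<tau>1 = (1, hl)"
  proof -
    have fst1: "fst (\<gamma> \<tau>1) = 1" using \<tau>1F by (simp add: Fb_def \<pi>_def)
    have "norm (snd (\<gamma> \<tau>1) - hl) \<le> e" if e: "e > 0" for e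
    proof -
      obtain \<eta> where \<eta>: "\<eta> > 0" "\<eta> \<le> 1" "\<And>u. 1 - \<eta> < u \<Longrightarrow> u < 1 \<Longrightarrow> norm (h u - hl) \<le> e"
      proof -
        have "\<forall>\<^sub>F u in at_left 1. dist (h u) hl < e" using left1 e by (rule tendstoD)
        then obtain b where b: "b < 1" "\<And>u. b < u \<Longrightarrow> u < 1 \<Longrightarrow> dist (h u) hl < e"
          unfolding eventually_at_left_field by blast
        show ?thesis by (rule that[of "min (1 - b) 1"]) (use b in \<open>auto simp: dist_norm less_imp_le\<close>)
      qed
      have segb: "norm (x - hl) \<le> e" if "1 - \<eta> < t" "t < 1" "0 < t" "x \<in> closed_segment (lft h t) (h t)" for t x
      proof (rule seg_cball[OF that(4)])
        show "norm (h t - hl) \<le> e" using \<eta> that by auto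
        show "norm (lft h t - hl) \<le> e"
          by (rule lft_bound[OF hc that(3), of "t - (1 - \<eta>)"]) (use that \<eta> in auto)
      qed
      have "snd (\<gamma> \<tau>1) \<in> cball hl e"
      proof (rule Lim_in_closed_set[OF closed_cball])
        show "((\<lambda>\<tau>. snd (\<gamma> \<tau>)) \<longlongrightarrow> snd (\<gamma> \<tau>1)) (at \<tau>1 within {0..<\<tau>1})"
        proof -
          have "continuous_on {0..1} (\<lambda>\<tau>. snd (\<gamma> \<tau>))" by (rule continuous_on_snd[OF cont])
          then have "((\<lambda>\<tau>. snd (\<gamma> \<tau>)) \<longlongrightarrow> snd (\<gamma> \<tau>1)) (at \<tau>1 within {0..1})"
            using \<tau>1pos \<tau>1_le1 unfolding continuous_on_def by simp
          then show ?thesis by (rule tendsto_within_subset) (use \<tau>1_le1 in auto)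
        qed
        show "at \<tau>1 within {0..<\<tau>1} \<noteq> bot"
          using \<tau>1pos by (simp add: at_within_eq_bot_iff closure_atLeastLessThan)
        have "(\<pi> \<longlongrightarrow> \<pi> \<tau>1) (at \<tau>1 within {0..<\<tau>1})"
        proof -
          have "(\<pi> \<longlongrightarrow> \<pi> \<tau>1) (at \<tau>1 within {0..1})"
            using \<pi>c \<tau>1pos \<tau>1_le1 unfolding continuous_on_def by simp
          then show ?thesis by (rule tendsto_within_subset) (use \<tau>1_le1 in auto)
        qed
        moreover have "\<pi> \<tau>1 = 1" using fst1 by (simp add: \<pi>_def)
        ultimately have lim1: "(\<pi> \<longlongrightarrow> 1) (at \<tau>1 within {0..<\<tau>1})" by simp
        have "\<forall>\<^sub>F \<tau> in at \<tau>1 within {0..<\<tau>1}. 1 - \<eta> < \<pi> \<tau>"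
          by (rule order_tendstoD(1)[OF lim1]) (use \<eta>(1) in simp)
        moreover have "\<forall>\<^sub>F \<tau> in at \<tau>1 within {0..<\<tau>1}. \<tau> \<in> {0..<\<tau>1}"
          by (simp add: eventually_at_filter)
        ultimately show "\<forall>\<^sub>F \<tau> in at \<tau>1 within {0..<\<tau>1}. snd (\<gamma> \<tau>) \<in> cball hl e"
        proof eventually_elim
          case (elim \<tau>)
          have "\<tau> \<in> {0..1}" using elim \<tau>1_le1 by auto
          moreover have "\<pi> \<tau> < 1" using below elim by auto
          moreover have "0 < \<pi> \<tau>" using elim \<eta>(2) by linarith
          moreover have "snd (\<gamma> \<tau>) \<in> closed_segment (lft h (\<pi> \<tau>)) (h (\<pi> \<tau>))"
            using snd_seg calculation(1) by blast
          ultimately have "norm (snd (\<gamma> \<tau>) - hl) \<le> e" using segb[of "\<pi> \<tau>" "snd (\<gamma> \<tau>)"] elim by blast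
          then show ?case by (simp add: dist_norm norm_minus_commute)
        qed
      qed
      then show ?thesis by (simp add: dist_norm norm_minus_commute)
    qed
    then have "norm (snd (\<gamma> \<tau>1) - hl) \<le> 0" by (rule field_le_epsilon) simp
    then have "snd (\<gamma> \<tau>1) = hl" by simp
    then show ?thesis using fst1 by (simp add: prod_eq_iff)
  qed
  show ?thesis
  proof (cases "hl = h 1")
    case True
    have "snd (\<gamma> 1) \<in> closed_segment (lft h 1) (h 1)" using snd_seg[of 1] \<pi>1 by simp
    then have "snd (\<gamma> 1) = h 1" using True by (simp add: hl_def)
    then show ?thesis using \<pi>1 by (simp add: \<pi>_def prod_eq_iff)
  next
    case False
    define d where "d = h 1 - hl"
    have d0: "d \<noteq> 0" using False by (simp add: d_def)
    define lam where "lam x = ((x - hl) \<bullet> d) / (d \<bullet> d)" for x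
    have seg_param: "\<exists>u. 0 \<le> u \<and> u \<le> 1 \<and> x = hl + u *\<^sub>R d \<and> lam x = u"
      if xseg: "x \<in> closed_segment hl (h 1)" for x
    proof -
      obtain u where u: "0 \<le> u" "u \<le> 1" "x = (1 - u) *\<^sub>R hl + u *\<^sub>R h 1"
        using xseg by (auto simp: closed_segment_def)
      then have x: "x = hl + u *\<^sub>R d" by (simp add: d_def algebra_simps)
      then have "lam x = u" using d0 by (simp add: lam_def)
      then show ?thesis using u x by blast
    qed
    have seg1: "snd (\<gamma> \<tau>) \<in> closed_segment hl (h 1)" if "\<tau> \<in> {\<tau>1..1}" for \<tau>
    proof -
      have "\<tau> \<in> Fb" using that Fb_eq by simp
      then have "\<pi> \<tau> = 1" by (simp add: Fb_def)
      moreover have "\<tau> \<in> {0..1}" using that \<tau>1pos by auto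
      ultimately show ?thesis using snd_seg[of \<tau>] by (simp add: hl_def)
    qed
    have \<gamma>eq: "\<gamma> \<tau> = (1, snd (\<gamma> \<tau>))" if "\<tau> \<in> {\<tau>1..1}" for \<tau>
    proof -
      have "\<tau> \<in> Fb" using that Fb_eq by simp
      then have "fst (\<gamma> \<tau>) = 1" by (simp add: Fb_def \<pi>_def)
      then show ?thesis by (simp add: prod_eq_iff)
    qed
    define f where "f \<tau> = lam (snd (\<gamma> \<tau>))" for \<tau>
    have fc: "continuous_on {\<tau>1..1} f" unfolding f_def lam_def
      by (intro continuous_intros continuous_on_snd continuous_on_subset[OF cont]) (use \<tau>1pos d0 in auto)
    have finj: "\<tau> = \<tau>'" if tt: "\<tau> \<in> {\<tau>1..1}" "\<tau>' \<in> {\<tau>1..1}" "f \<tau> = f \<tau>'" for \<tau> \<tau>'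
    proof -
      obtain u where u: "snd (\<gamma> \<tau>) = hl + u *\<^sub>R d" "lam (snd (\<gamma> \<tau>)) = u"
        using seg_param[OF seg1[OF tt(1)]] by blast
      obtain u' where u': "snd (\<gamma> \<tau>') = hl + u' *\<^sub>R d" "lam (snd (\<gamma> \<tau>')) = u'"
        using seg_param[OF seg1[OF tt(2)]] by blast
      have "u = u'" using u u' tt(3) by (simp add: f_def)
      then have "\<gamma> \<tau> = \<gamma> \<tau>'" using \<gamma>eq[OF tt(1)] \<gamma>eq[OF tt(2)] u u' by simp
      moreover have "\<tau> \<in> {0..1}" "\<tau>' \<in> {0..1}" using tt \<tau>1pos by auto
      ultimately show ?thesis using bij by (auto simp: bij_betw_def inj_on_def)
    qed
    have f\<tau>1: "f \<tau>1 = 0" using g\<tau>1 by (simp add: f_def lam_def)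
    have "\<tau>h \<in> Fb" using \<tau>h by (simp add: Fb_def \<pi>_def)
    then have \<tau>hF: "\<tau>h \<in> {\<tau>1..1}" using Fb_eq by simp
    have f\<tau>h: "f \<tau>h = 1" using \<tau>h d0 by (simp add: f_def lam_def d_def)
    obtain u1 where u1: "0 \<le> u1" "u1 \<le> 1" "f 1 = u1" "snd (\<gamma> 1) = hl + u1 *\<^sub>R d"
      using seg_param[OF seg1[of 1]] \<tau>1_le1 by (auto simp: f_def)
    show ?thesis
    proof (cases "u1 = 1")
      case True
      then have "snd (\<gamma> 1) = h 1" using u1 by (simp add: d_def)
      then show ?thesis using \<gamma>eq[of 1] \<tau>1_le1 by auto
    next
      case False
      then have u1lt: "u1 < 1" using u1 by simp
      define v where "v = (u1 + 1) / 2"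
      have v: "u1 < v" "v < 1" "0 \<le> v" using u1lt u1 by (auto simp: v_def)
      have h1: "\<tau>h \<le> 1" using \<tau>hF by auto
      have "\<exists>x\<ge>\<tau>1. x \<le> \<tau>h \<and> f x = v"
      proof (rule IVT')
        show "f \<tau>1 \<le> v" using f\<tau>1 v by simp
        show "v \<le> f \<tau>h" using f\<tau>h v by simp
        show "\<tau>1 \<le> \<tau>h" using \<tau>hF by simp
        show "continuous_on {\<tau>1..\<tau>h} f" by (rule continuous_on_subset[OF fc]) (use h1 in auto)
      qed
      then obtain c where c: "\<tau>1 \<le> c" "c \<le> \<tau>h" "f c = v" by blast
      have "\<exists>x\<ge>\<tau>h. x \<le> 1 \<and> f x = v"
      proof (rule IVT2')
        show "f 1 \<le> v" using u1 v by simp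
        show "v \<le> f \<tau>h" using f\<tau>h v by simp
        show "\<tau>h \<le> 1" by fact
        show "continuous_on {\<tau>h..1} f" by (rule continuous_on_subset[OF fc]) (use \<tau>hF in auto)
      qed
      then obtain c' where c': "\<tau>h \<le> c'" "c' \<le> 1" "f c' = v" by blast
      have "c = c'" using finj[of c c'] c c' \<tau>hF by auto
      then have "c = \<tau>h" using c c' by auto
      then show ?thesis using c f\<tau>h v by simp
    qed
  qed
qed

definition Mosc :: "(real \<Rightarrow> 'a::real_normed_vector) \<Rightarrow> real set \<Rightarrow> real \<Rightarrow> real \<Rightarrow> real" where
  "Mosc F S a b = Sup ((\<lambda>(u, v). norm (F u - F v)) ` ((S \<inter> {a..b}) \<times> (S \<inter> {a..b})))"

lemma Mosc_bdd:
  assumes "BVS F S V"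
  shows "bdd_above ((\<lambda>(u, v). norm (F u - F v)) ` ((S \<inter> {a..b}) \<times> (S \<inter> {a..b})))"
  by (rule bdd_aboveI[of _ V]) (use BVS_pair[OF assms] in auto)

lemma Mosc_le:
  assumes "BVS F S V" "u \<in> S \<inter> {a..b}" "v \<in> S \<inter> {a..b}"
  shows "norm (F u - F v) \<le> Mosc F S a b"
  unfolding Mosc_def
  by (rule cSup_upper[OF _ Mosc_bdd[OF assms(1)]]) (use assms in force)

lemma Mosc_nonneg:
  assumes "BVS F S V" "a \<in> S" "a \<le> b"
  shows "0 \<le> Mosc F S a b"
  using Mosc_le[OF assms(1), of a a b a] assms by simp

lemma Mosc_approx:
  assumes "BVS F S V" "a \<in> S" "a \<le> b" "\<eta> > 0"
  shows "\<exists>u v. u \<in> S \<inter> {a..b} \<and> v \<in> S \<inter> {a..b} \<and> u \<le> v \<and> Mosc F S a b - \<eta> < norm (F v - F u)"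
proof -
  let ?X = "(\<lambda>(u, v). norm (F u - F v)) ` ((S \<inter> {a..b}) \<times> (S \<inter> {a..b}))"
  have ne: "?X \<noteq> {}" using assms by auto
  have "Mosc F S a b - \<eta> < Sup ?X" using assms(4) by (simp add: Mosc_def)
  then obtain x where "x \<in> ?X" "Mosc F S a b - \<eta> < x"
    using less_cSup_iff[OF ne Mosc_bdd[OF assms(1)]] by blast
  then obtain u v where uv: "u \<in> S \<inter> {a..b}" "v \<in> S \<inter> {a..b}" "Mosc F S a b - \<eta> < norm (F u - F v)"
    by auto
  show ?thesis
  proof (cases "u \<le> v")
    case True then show ?thesis using uv by (intro exI[of _ u] exI[of _ v]) (auto simp: norm_minus_commute)
  next
    case False then show ?thesis using uv by (intro exI[of _ v] exI[of _ u]) auto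
  qed
qed

lemma Mosc_sum:
  fixes F :: "real \<Rightarrow> 'a::real_normed_vector"
  assumes BV: "BVS F S V" and N: "N > 0" and grid: "\<And>j. j \<le> N \<Longrightarrow> real j / real N \<in> S"
  shows "(\<Sum>j<N. Mosc F S (real j / real N) (real (Suc j) / real N)) \<le> V"
proof (rule field_le_epsilon)
  fix \<eta> :: real assume \<eta>: "\<eta> > 0"
  define \<eta>' where "\<eta>' = \<eta> / real N"
  have \<eta>': "\<eta>' > 0" using \<eta> N by (simp add: \<eta>'_def)
  have "\<exists>u v. u \<in> S \<inter> {real j / real N..real (Suc j) / real N} \<and> v \<in> S \<inter> {real j / real N..real (Suc j) / real N}
      \<and> u \<le> v \<and> Mosc F S (real j / real N) (real (Suc j) / real N) - \<eta>' < norm (F v - F u)" if "j < N" for j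
    by (rule Mosc_approx[OF BV grid _ \<eta>']) (use that N in \<open>auto simp: divide_right_mono\<close>)
  then obtain u v where uv: "\<And>j. j < N \<Longrightarrow> u j \<in> S \<inter> {real j / real N..real (Suc j) / real N}"
    "\<And>j. j < N \<Longrightarrow> v j \<in> S \<inter> {real j / real N..real (Suc j) / real N}"
    "\<And>j. j < N \<Longrightarrow> u j \<le> v j"
    "\<And>j. j < N \<Longrightarrow> Mosc F S (real j / real N) (real (Suc j) / real N) - \<eta>' < norm (F (v j) - F (u j))"
    by metis
  define xs where "xs n = concat (map (\<lambda>j. [u j, v j]) [0..<n])" for n
  have ind: "sorted (xs n) \<and> set (xs n) \<subseteq> S \<and> (\<forall>x\<in>set (xs n). x \<le> real n / real N)
     \<and> (\<Sum>j<n. norm (F (v j) - F (u j))) \<le> LV F (xs n)" if "n \<le> N" for n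
    using that
  proof (induction n)
    case 0 then show ?case by (simp add: xs_def)
  next
    case (Suc n)
    then have IH: "sorted (xs n)" "set (xs n) \<subseteq> S" "\<forall>x\<in>set (xs n). x \<le> real n / real N"
      "(\<Sum>j<n. norm (F (v j) - F (u j))) \<le> LV F (xs n)" by auto
    have n: "n < N" using Suc by simp
    have xsS: "xs (Suc n) = xs n @ [u n, v n]" by (simp add: xs_def)
    have un: "real n / real N \<le> u n" "u n \<le> v n" "v n \<le> real (Suc n) / real N" "u n \<in> S" "v n \<in> S"
      using uv[OF n] by auto
    have "sorted (xs (Suc n))" unfolding xsS using IH(1,3) un by (auto simp: sorted_append)
    moreover have "set (xs (Suc n)) \<subseteq> S" unfolding xsS using IH(2) un by auto
    moreover have "\<forall>x\<in>set (xs (Suc n)). x \<le> real (Suc n) / real N"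
    proof -
      have "real n / real N \<le> real (Suc n) / real N" using N by (simp add: divide_right_mono)
      then show ?thesis unfolding xsS using IH(3) un by auto
    qed
    moreover have "(\<Sum>j<Suc n. norm (F (v j) - F (u j))) \<le> LV F (xs (Suc n))"
      unfolding xsS using IH(4) LV_snoc2[of F "xs n" "v n" "u n"] by simp
    ultimately show ?case by blast
  qed
  have "(\<Sum>j<N. Mosc F S (real j / real N) (real (Suc j) / real N))
      \<le> (\<Sum>j<N. norm (F (v j) - F (u j)) + \<eta>')"
  proof (rule sum_mono)
    fix j assume "j \<in> {..<N}"
    then show "Mosc F S (real j / real N) (real (Suc j) / real N) \<le> norm (F (v j) - F (u j)) + \<eta>'"
      using uv(4)[of j] by simp
  qed
  also have "\<dots> = (\<Sum>j<N. norm (F (v j) - F (u j))) + \<eta>"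
    using N by (simp add: sum.distrib \<eta>'_def)
  also have "\<dots> \<le> LV F (xs N) + \<eta>" using ind[of N] by simp
  also have "\<dots> \<le> V + \<eta>" using ind[of N] BV unfolding BVS_def by auto
  finally show "(\<Sum>j<N. Mosc F S (real j / real N) (real (Suc j) / real N)) \<le> V + \<eta>" .
qed

definition cellind :: "nat \<Rightarrow> nat \<Rightarrow> real \<Rightarrow> real" where
  "cellind N j s = indicator {real j / real N..<real (Suc j) / real N} s"

definition stepf :: "nat \<Rightarrow> (nat \<Rightarrow> real) \<Rightarrow> real \<Rightarrow> real" where
  "stepf N c s = (\<Sum>j<N. c j * cellind N j s)"

lemma cell_of:
  assumes N: "N > 0" and s: "0 \<le> s" "s < 1"
  obtains j where "j < N" "real j / real N \<le> s" "s < real (Suc j) / real N"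
proof -
  define j where "j = nat \<lfloor>s * real N\<rfloor>"
  have fl: "real j = of_int \<lfloor>s * real N\<rfloor>" using s N by (simp add: j_def)
  have a: "real j \<le> s * real N" using fl by linarith
  have b: "s * real N < real j + 1" using fl by linarith
  have "s * real N < real N" using s N by simp
  then have "j < N" using a b fl by linarith
  moreover have "real j / real N \<le> s" using a N by (simp add: field_simps)
  moreover have "s < real (Suc j) / real N" using b N by (simp add: field_simps)
  ultimately show ?thesis by (rule that)
qed

lemma stepf_at:
  assumes N: "N > 0" "j < N" and s: "real j / real N \<le> s" "s < real (Suc j) / real N"
  shows "stepf N c s = c j"
proof -
  have "cellind N i s = (if i = j then 1 else 0)" if "i < N" for i
  proof (cases "i = j")
    case True then show ?thesis using s by (simp add: cellind_def)
  next
    case False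
    show ?thesis
    proof (cases "i < j")
      case True
      then have "real (Suc i) \<le> real j" by simp
      then have "real (Suc i) / real N \<le> real j / real N" using N by (simp add: divide_right_mono)
      then show ?thesis using False s by (auto simp: cellind_def)
    next
      case False': False
      then have "real (Suc j) \<le> real i" using False by simp
      then have "real (Suc j) / real N \<le> real i / real N" using N by (simp add: divide_right_mono)
      then show ?thesis using False s by (auto simp: cellind_def)
    qed
  qed
  then have "stepf N c s = (\<Sum>i<N. if i = j then c i else 0)"
    unfolding stepf_def by (intro sum.cong) auto
  also have "\<dots> = c j" using N by simp
  finally show ?thesis .
qed

lemma stepf_nonneg: "(\<And>j. 0 \<le> c j) \<Longrightarrow> 0 \<le> stepf N c s"
  unfolding stepf_def cellind_def by (intro sum_nonneg) auto

lemma cellind_int: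
  assumes "N > 0" "j < N"
  shows "integrable lborel (\<lambda>s. indicator {0..1} s * cellind N j s)"
    "(\<integral>s. indicator {0..1} s * cellind N j s \<partial>lborel) = 1 / real N"
proof -
  have z: "0 \<le> real j / real N" by simp
  have o: "real (Suc j) / real N \<le> 1" using assms by (simp add: field_simps)
  have sub: "{real j / real N..<real (Suc j) / real N} \<subseteq> {0..1}"
  proof
    fix x assume x: "x \<in> {real j / real N..<real (Suc j) / real N}"
    then have "0 \<le> x" using z by (meson atLeastLessThan_iff order_trans)
    moreover have "x \<le> 1" using x o by (meson atLeastLessThan_iff less_le_not_le order_trans)
    ultimately show "x \<in> {0..1}" by simp
  qed
  have eq: "(\<lambda>s. indicator {0..1} s * cellind N j s) = indicator {real j / real N..<real (Suc j) / real N}"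
    using sub by (auto simp: cellind_def indicator_def fun_eq_iff)
  show "integrable lborel (\<lambda>s. indicator {0..1} s * cellind N j s)"
  proof -
    have "real j / real N \<le> real (Suc j) / real N" using assms by (simp add: divide_right_mono)
    then show ?thesis unfolding eq by (simp add: integrable_indicator_iff emeasure_lborel_Ico del: of_nat_Suc)
  qed
  have "real j / real N \<le> real (Suc j) / real N" using assms by (simp add: divide_right_mono)
  then show "(\<integral>s. indicator {0..1} s * cellind N j s \<partial>lborel) = 1 / real N"
    unfolding eq by (simp add: diff_divide_distrib[symmetric])
qed

lemma stepf_int:
  assumes "N > 0"
  shows "set_integrable lborel {0..1} (stepf N c)"
    "(LINT s:{0..1}|lborel. stepf N c s) = (\<Sum>j<N. c j) / real N"
proof -
  have e: "(\<lambda>s. indicator {0..1} s *\<^sub>R stepf N c s) = (\<lambda>s. \<Sum>j<N. c j * (indicator {0..1} s * cellind N j s))"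
    by (auto simp: stepf_def sum_distrib_left fun_eq_iff mult_ac)
  show "set_integrable lborel {0..1} (stepf N c)"
    unfolding set_integrable_def e using cellind_int(1)[OF assms] by auto
  have "(LINT s:{0..1}|lborel. stepf N c s) = (\<Sum>j<N. c j * (\<integral>s. indicator {0..1} s * cellind N j s \<partial>lborel))"
    unfolding set_lebesgue_integral_def e
    by (subst Bochner_Integration.integral_sum) (use cellind_int(1)[OF assms] in auto)
  also have "\<dots> = (\<Sum>j<N. c j / real N)" using cellind_int(2)[OF assms] by simp
  also have "\<dots> = (\<Sum>j<N. c j) / real N" by (simp add: sum_divide_distrib)
  finally show "(LINT s:{0..1}|lborel. stepf N c s) = (\<Sum>j<N. c j) / real N" .
qed

lemma rho1'_extract:
  assumes "rho1' g h < ereal \<delta>"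
  shows "\<exists>\<gamma>1 \<gamma>2. \<gamma>1 \<in> Pi' g \<and> \<gamma>2 \<in> Pi' h \<and> (\<forall>\<tau>\<in>{0..1}. norm (\<gamma>1 \<tau> - \<gamma>2 \<tau>) < \<delta>)"
proof -
  obtain p where p: "p \<in> Pi' g \<times> Pi' h" "(SUP t\<in>{0..1}. ereal (norm (fst p t - snd p t))) < ereal \<delta>"
    using assms unfolding rho1'_def by (auto simp: INF_less_iff)
  have "norm (fst p \<tau> - snd p \<tau>) < \<delta>" if "\<tau> \<in> {0..1}" for \<tau>
  proof -
    have "ereal (norm (fst p \<tau> - snd p \<tau>)) \<le> (SUP t\<in>{0..1}. ereal (norm (fst p t - snd p t)))"
      using that by (rule SUP_upper)
    then have "ereal (norm (fst p \<tau> - snd p \<tau>)) < ereal \<delta>" using p(2) by (rule order.strict_trans1)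
    then show ?thesis by simp
  qed
  then show ?thesis using p(1) by (intro exI[of _ "fst p"] exI[of _ "snd p"]) auto
qed

lemma rho1'_end:
  assumes "g \<in> cadlag01" "h \<in> cadlag01" "rho1' g h < ereal \<delta>"
  shows "norm (g 1 - h 1) < \<delta>"
proof -
  obtain \<gamma>1 \<gamma>2 where g: "\<gamma>1 \<in> Pi' g" "\<gamma>2 \<in> Pi' h" "\<forall>\<tau>\<in>{0..1}. norm (\<gamma>1 \<tau> - \<gamma>2 \<tau>) < \<delta>"
    using rho1'_extract[OF assms(3)] by blast
  have "norm (\<gamma>1 1 - \<gamma>2 1) < \<delta>" using g(3) by simp
  then show ?thesis using endpoint[OF assms(1) g(1)] endpoint[OF assms(2) g(2)] by simp
qed

lemma sum_shift_bounds_aux: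
  fixes M :: "nat \<Rightarrow> real"
  assumes "\<And>i. 0 \<le> M i" "M N = 0"
  shows "(\<Sum>j<N. M (j - 1) + M j + M (Suc j)) \<le> 4 * (\<Sum>j<N. M j)"
proof -
  have a: "(\<Sum>j<N. M (j - 1)) \<le> 2 * (\<Sum>j<N. M j)"
  proof (cases N)
    case 0 then show ?thesis by simp
  next
    case (Suc N')
    have "(\<Sum>j<N. M (j - 1)) = M 0 + (\<Sum>i<N'. M i)"
      unfolding Suc by (subst sum.lessThan_Suc_shift) simp
    also have "\<dots> \<le> (\<Sum>j<N. M j) + (\<Sum>j<N. M j)"
    proof (rule add_mono)
      show "M 0 \<le> (\<Sum>j<N. M j)" using assms(1) Suc by (intro member_le_sum) auto
      show "(\<Sum>i<N'. M i) \<le> (\<Sum>j<N. M j)" using assms(1) Suc by (intro sum_mono2) auto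
    qed
    finally show ?thesis by simp
  qed
  have b: "(\<Sum>j<N. M (Suc j)) \<le> (\<Sum>j<N. M j)"
  proof -
    have "(\<Sum>j<Suc N. M j) = M 0 + (\<Sum>j<N. M (Suc j))" by (rule sum.lessThan_Suc_shift)
    moreover have "(\<Sum>j<Suc N. M j) = (\<Sum>j<N. M j)" using assms(2) by simp
    ultimately show ?thesis using assms(1)[of 0] by simp
  qed
  show ?thesis using a b by (simp add: sum.distrib)
qed

lemma rho1'_pointwise:
  fixes g h :: "real \<Rightarrow> 'a::euclidean_space"
  assumes gc: "g \<in> cadlag01" and hc: "h \<in> cadlag01" and BV: "BVS (pval h) {0..1} V"
    and rho: "rho1' g h < ereal \<delta>" and \<delta>: "\<delta> > 0" and N: "N > 0" "2 * \<delta> \<le> 1 / real N"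
    and s: "0 < s" "s < 1"
  defines "M \<equiv> \<lambda>i. if i < N then Mosc (pval h) {0..1} (real i / real N) (real (Suc i) / real N) else 0"
  shows "norm (g s - h s) \<le> \<delta> + stepf N (\<lambda>j. M (j - 1) + M j + M (Suc j)) s"
proof -
  let ?F = "pval h"
  have Mnn: "0 \<le> M i" for i
  proof (cases "i < N")
    case True
    then have "real i / real N \<le> 1" using N by (simp add: field_simps)
    then have "0 \<le> Mosc (pval h) {0..1} (real i / real N) (real (Suc i) / real N)"
      by (intro Mosc_nonneg[OF BV]) (auto simp: divide_right_mono)
    then show ?thesis using True by (simp add: M_def)
  qed (simp add: M_def)
  obtain j where j: "j < N" "real j / real N \<le> s" "s < real (Suc j) / real N"
    using cell_of[OF N(1), of s] s by auto
  define R where "R = M (j - 1) + M j + M (Suc j)"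
  have stepR: "stepf N (\<lambda>j. M (j - 1) + M j + M (Suc j)) s = R"
    unfolding R_def by (rule stepf_at[OF N(1) j])
  define a where "a = real j / real N"
  define b where "b = real (Suc j) / real N"
  have wid: "b = a + 1 / real N" by (simp add: a_def b_def add_divide_distrib)
  have a0: "0 \<le> a" by (simp add: a_def)
  have b1: "b \<le> 1" using j N by (simp add: b_def field_simps)
  have Mj: "norm (?F u - ?F v) \<le> M j" if "u \<in> {a..b}" "v \<in> {a..b}" for u v
    unfolding M_def using j(1) Mosc_le[OF BV, of u a b v] that a0 b1 by (simp add: a_def b_def)
  have sab: "s \<in> {a..b}" using j by (simp add: a_def b_def)
  have Q: "norm (?F u - ?F s) \<le> R" if u: "0 \<le> u" "u \<le> 1" "\<bar>u - s\<bar> < 2 * \<delta>" for u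
  proof -
    consider "u \<in> {a..b}" | "b < u" | "u < a" by force
    then show ?thesis
    proof cases
      case 1
      then show ?thesis using Mj[OF 1 sab] Mnn[of "j - 1"] Mnn[of "Suc j"] by (simp add: R_def)
    next
      case 2
      have sj: "Suc j < N"
      proof -
        have "real (Suc j) / real N < 1" using 2 u b_def by simp
        then show ?thesis using N by (simp add: field_simps)
      qed
      have ub: "u \<le> real (Suc (Suc j)) / real N"
      proof -
        have "u < s + 1 / real N" using u N(2) by simp
        also have "\<dots> \<le> b + 1 / real N" using sab by simp
        also have "\<dots> = real (Suc (Suc j)) / real N" by (simp add: b_def add_divide_distrib)
        finally show ?thesis by simp
      qed
      have "norm (?F u - ?F b) \<le> M (Suc j)"
        unfolding M_def using sj Mosc_le[OF BV, of u b "real (Suc (Suc j)) / real N" b] ub 2 u b1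
        by (simp add: b_def)
      moreover have "norm (?F b - ?F s) \<le> M j" using Mj[of b s] sab b1 a0 by (simp add: wid)
      ultimately have "norm (?F u - ?F s) \<le> M (Suc j) + M j"
        using norm_triangle_ineq[of "?F u - ?F b" "?F b - ?F s"] by simp
      then show ?thesis using Mnn[of "j - 1"] by (simp add: R_def)
    next
      case 3
      have j1: "j \<ge> 1"
      proof (rule ccontr)
        assume "\<not> j \<ge> 1" then have "j = 0" by simp
        then show False using 3 u by (simp add: a_def)
      qed
      have rj: "real (j - 1) = real j - 1" using j1 by (simp add: of_nat_diff)
      have ua: "real (j - 1) / real N \<le> u"
      proof -
        have "s - 1 / real N < u" using u N(2) by simp
        moreover have "a - 1 / real N \<le> s - 1 / real N" using sab by simp
        moreover have "a - 1 / real N = real (j - 1) / real N" using rj by (simp add: a_def diff_divide_distrib)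
        ultimately show ?thesis by simp
      qed
      have "norm (?F u - ?F a) \<le> M (j - 1)"
      proof -
        have "Suc (j - 1) = j" using j1 by simp
        then show ?thesis
          unfolding M_def using j(1) j1 Mosc_le[OF BV, of u "real (j - 1) / real N" a a] ua 3 u a0
          by (simp add: a_def)
      qed
      moreover have "norm (?F a - ?F s) \<le> M j" using Mj[of a s] sab a0 by (simp add: wid)
      ultimately have "norm (?F u - ?F s) \<le> M (j - 1) + M j"
        using norm_triangle_ineq[of "?F u - ?F a" "?F a - ?F s"] by simp
      then show ?thesis using Mnn[of "Suc j"] by (simp add: R_def)
    qed
  qed
  obtain \<gamma>1 \<gamma>2 where gg: "\<gamma>1 \<in> Pi' g" "\<gamma>2 \<in> Pi' h" "\<forall>\<tau>\<in>{0..1}. norm (\<gamma>1 \<tau> - \<gamma>2 \<tau>) < \<delta>"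
    using rho1'_extract[OF rho] by blast
  have "(s, g s) \<in> Gamma' g" using s by (auto simp: Gamma'_def)
  then have "(s, g s) \<in> \<gamma>1 ` {0..1}" using gg(1) unfolding Pi'_def bij_betw_def by simp
  then obtain \<tau> where \<tau>: "\<tau> \<in> {0..1}" "\<gamma>1 \<tau> = (s, g s)" by auto
  have "\<gamma>2 \<tau> \<in> \<gamma>2 ` {0..1}" using \<tau>(1) by (rule imageI)
  then have "\<gamma>2 \<tau> \<in> Gamma' h" using gg(2) unfolding Pi'_def bij_betw_def by simp
  then obtain t x where tx: "\<gamma>2 \<tau> = (t, x)" "t \<in> {0..1}" "x \<in> closed_segment (lft h t) (h t)"
    by (auto simp: Gamma'_def)
  have "norm (\<gamma>1 \<tau> - \<gamma>2 \<tau>) < \<delta>" using gg(3) \<tau>(1) by blast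
  then have close: "norm ((s, g s) - (t, x)) < \<delta>" unfolding \<tau>(2) tx(1) .
  have cl: "norm (s - t, g s - x) < \<delta>" using close by simp
  have "norm (s - t) < \<delta>" by (rule order.strict_trans1[OF norm_fst_le cl])
  then have ts: "\<bar>t - s\<bar> < \<delta>" by (simp add: abs_minus_commute)
  have gx: "norm (g s - x) < \<delta>" by (rule order.strict_trans1[OF norm_snd_le cl])
  have e1: "norm (h t - ?F s) \<le> R"
  proof (cases "t = 0")
    case False
    then have "h t = ?F t" by (simp add: pval_def)
    then show ?thesis using Q[of t] tx(2) ts \<delta> by simp
  next
    case True
    have sd: "s < \<delta>" using ts True s by simp
    have "continuous (at_right 0) h" using hc by (simp add: cadlag01_def)
    then have lim: "(h \<longlongrightarrow> h 0) (at_right 0)" by (simp add: continuous_within)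
    have "h 0 \<in> cball (?F s) R"
    proof (rule Lim_in_closed_set[OF closed_cball _ _ lim])
      show "\<forall>\<^sub>F u in at_right 0. h u \<in> cball (?F s) R"
      proof (rule eventually_mono[OF eventually_at_right_real[of 0 "min 1 \<delta>"]])
        show "0 < min 1 \<delta>" using \<delta> by simp
        fix u assume u: "u \<in> {0<..<min 1 \<delta>}"
        then have "norm (?F u - ?F s) \<le> R" using sd s by (intro Q) auto
        then show "h u \<in> cball (?F s) R" using u by (simp add: pval_def dist_norm norm_minus_commute)
      qed
    qed simp
    then show ?thesis using True by (simp add: dist_norm norm_minus_commute)
  qed
  have e2: "norm (lft h t - ?F s) \<le> R"
  proof (cases "t = 0")
    case True
    then have "lft h t = ?F 0" by (simp add: lft_def pval_def)
    then show ?thesis using Q[of 0] True ts \<delta> by simp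
  next
    case False
    then have t0: "0 < t" using tx(2) by simp
    show ?thesis
    proof (rule lft_bound[OF hc t0 _ _])
      show "t \<le> 1" using tx(2) by simp
      show "0 < min t (\<delta> - \<bar>t - s\<bar>)" using t0 ts by simp
      fix u assume u: "t - min t (\<delta> - \<bar>t - s\<bar>) < u" "u < t"
      then have "0 < u" by simp
      moreover have "\<bar>u - s\<bar> < 2 * \<delta>" using u ts \<delta> by linarith
      ultimately have "norm (?F u - ?F s) \<le> R" using u tx(2) by (intro Q) auto
      then show "norm (h u - ?F s) \<le> R" using \<open>0 < u\<close> by (simp add: pval_def)
    qed
  qed
  have "norm (x - ?F s) \<le> R" by (rule seg_cball[OF tx(3) e2 e1])
  then have "norm (g s - h s) \<le> \<delta> + R"
    using norm_triangle_ineq[of "g s - x" "x - ?F s"] gx s by (simp add: pval_def)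
  then show ?thesis using stepR by simp
qed

lemma rho1'_step_sum:
  fixes h :: "real \<Rightarrow> 'a::euclidean_space"
  assumes BV: "BVS (pval h) {0..1} V" and N: "N > 0"
  defines "M \<equiv> \<lambda>i. if i < N then Mosc (pval h) {0..1} (real i / real N) (real (Suc i) / real N) else 0"
  shows "(\<Sum>j<N. M (j - 1) + M j + M (Suc j)) \<le> 4 * V" "\<And>j. 0 \<le> M (j - 1) + M j + M (Suc j)"
proof -
  have Mnn: "0 \<le> M i" for i
  proof (cases "i < N")
    case True
    then have "real i / real N \<le> 1" using N by (simp add: field_simps)
    then have "0 \<le> Mosc (pval h) {0..1} (real i / real N) (real (Suc i) / real N)"
      by (intro Mosc_nonneg[OF BV]) (auto simp: divide_right_mono)
    then show ?thesis using True by (simp add: M_def)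
  qed (simp add: M_def)
  have "(\<Sum>j<N. M j) = (\<Sum>j<N. Mosc (pval h) {0..1} (real j / real N) (real (Suc j) / real N))"
    by (simp add: M_def)
  also have "\<dots> \<le> V" by (rule Mosc_sum[OF BV N]) (use N in \<open>auto simp: field_simps\<close>)
  finally have "(\<Sum>j<N. M j) \<le> V" .
  moreover have "(\<Sum>j<N. M (j - 1) + M j + M (Suc j)) \<le> 4 * (\<Sum>j<N. M j)"
    by (rule sum_shift_bounds_aux) (use Mnn in \<open>auto simp: M_def\<close>)
  ultimately show "(\<Sum>j<N. M (j - 1) + M j + M (Suc j)) \<le> 4 * V" by simp
  show "\<And>j. 0 \<le> M (j - 1) + M j + M (Suc j)" using Mnn by (simp add: add_nonneg_nonneg)
qed

lemma BVS_V_nonneg: "BVS F S V \<Longrightarrow> 0 \<le> V"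
  unfolding BVS_def by (drule spec[of _ "[]"]) simp

lemma cadlag_zero: "h \<in> cadlag01 \<Longrightarrow> t \<notin> {0..1} \<Longrightarrow> h t = 0"
  by (simp add: cadlag01_def)

lemma cadlag_rc0: "h \<in> cadlag01 \<Longrightarrow> (h \<longlongrightarrow> h 0) (at_right 0)"
  by (simp add: cadlag01_def continuous_within)

lemma BVS_bound:
  assumes hc: "h \<in> cadlag01" and BV: "BVS (pval h) {0..1} V"
  shows "norm (h t) \<le> V"
proof -
  have V0: "0 \<le> V" by (rule BVS_V_nonneg[OF BV])
  have pos: "norm (h u) \<le> V" if "0 < u" "u \<le> 1" for u
    using BVS_pair[OF BV, of u 0] that by (simp add: pval_def)
  show ?thesis
  proof (cases "t \<in> {0..1}")
    case False then show ?thesis using cadlag_zero[OF hc False] V0 by simp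
  next
    case True
    show ?thesis
    proof (cases "t = 0")
      case False then show ?thesis using True pos by simp
    next
      case t0: True
      have "h 0 \<in> cball 0 V"
      proof (rule Lim_in_closed_set[OF closed_cball _ _ cadlag_rc0[OF hc]])
        show "\<forall>\<^sub>F u in at_right 0. h u \<in> cball 0 V"
          by (rule eventually_mono[OF eventually_at_right_real[of 0 1]]) (use pos in auto)
      qed simp
      then show ?thesis using t0 by simp
    qed
  qed
qed

lemma diag_subseq:
  fixes hs :: "nat \<Rightarrow> real \<Rightarrow> 'a::euclidean_space"
  assumes bd: "\<And>n t. norm (hs n t) \<le> V"
  shows "\<exists>\<sigma>. strict_mono \<sigma> \<and> (\<forall>q\<in>\<rat>. convergent (\<lambda>k. hs (\<sigma> k) q))"
proof -
  obtain m :: "real \<Rightarrow> nat" where "bij_betw m \<rat> UNIV"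
    using countable_rat Rats_infinite by (erule countableE_infinite)
  then obtain r :: "nat \<Rightarrow> real" where bij: "bij_betw r UNIV \<rat>"
    using bij_betw_inv by blast
  let ?P = "\<lambda>n s. convergent (\<lambda>k. hs (s k) (r n))"
  interpret nat: subseqs ?P
  proof (unfold subseqs_def, intro allI impI)
    fix n :: nat and s :: "nat \<Rightarrow> nat" assume s: "strict_mono s"
    have "bounded (range (\<lambda>k. hs (s k) (r n)))"
      using bd by (intro boundedI[of _ V]) auto
    then obtain l s' where "strict_mono s'" "((\<lambda>k. hs (s k) (r n)) \<circ> s') \<longlonglongrightarrow> l"
      using bounded_imp_convergent_subsequence by blast
    then show "\<exists>s'. strict_mono s' \<and> ?P n (s \<circ> s')"
      by (intro exI[of _ s']) (auto simp: convergent_def comp_def)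
  qed
  define \<sigma> where "\<sigma> = nat.diagseq"
  have sm: "strict_mono \<sigma>" unfolding \<sigma>_def by (rule nat.subseq_diagseq)
  have "?P n \<sigma>" for n
  proof -
    have "?P n (nat.diagseq \<circ> (+) (Suc n))"
      by (rule nat.diagseq_holds) (auto simp: comp_def dest: convergent_subseq_convergent)
    then obtain L where "(\<lambda>k. hs (\<sigma> (Suc n + k)) (r n)) \<longlonglongrightarrow> L"
      by (auto simp: convergent_def \<sigma>_def comp_def)
    then have "(\<lambda>k. hs (\<sigma> (k + Suc n)) (r n)) \<longlonglongrightarrow> L" by (simp add: add.commute)
    then have "(\<lambda>k. hs (\<sigma> k) (r n)) \<longlonglongrightarrow> L" by (rule LIMSEQ_offset)
    then show ?thesis by (auto simp: convergent_def)
  qed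
  moreover have "\<forall>q\<in>\<rat>. \<exists>n. r n = q" using bij unfolding bij_betw_def by (metis rangeE)
  ultimately show ?thesis using sm by metis
qed

definition SQ :: "real set" where "SQ = \<rat> \<inter> {0..1}"

definition phiF :: "(nat \<Rightarrow> real \<Rightarrow> 'a::euclidean_space) \<Rightarrow> (nat \<Rightarrow> nat) \<Rightarrow> real \<Rightarrow> 'a" where
  "phiF hs \<sigma> q = (if q = 0 then 0 else lim (\<lambda>k. hs (\<sigma> k) q))"

definition hlim :: "(nat \<Rightarrow> real \<Rightarrow> 'a::euclidean_space) \<Rightarrow> (nat \<Rightarrow> nat) \<Rightarrow> real \<Rightarrow> 'a" where
  "hlim hs \<sigma> t = (if 0 \<le> t \<and> t < 1 then Lim (at t within (SQ \<inter> {t<..})) (phiF hs \<sigma>)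
     else if t = 1 then phiF hs \<sigma> 1 else 0)"

lemma SQ_dense: "a < b \<Longrightarrow> 0 \<le> a \<Longrightarrow> b \<le> 1 \<Longrightarrow> \<exists>q\<in>SQ. a < q \<and> q < b"
  using Rats_dense_in_real[of a b] by (auto simp: SQ_def)

lemma grid_SQ: "N > 0 \<Longrightarrow> j \<le> N \<Longrightarrow> real j / real N \<in> SQ"
  by (auto simp: SQ_def field_simps)

lemma SQ_islimpt: "0 \<le> t \<Longrightarrow> t < 1 \<Longrightarrow> at t within (SQ \<inter> {t<..}) \<noteq> bot"
  unfolding trivial_limit_within islimpt_approachable_real
proof (intro allI impI notI)
  assume t: "0 \<le> t" "t < 1"
  assume "\<not> (\<forall>\<epsilon>>0. \<exists>x'\<in>SQ \<inter> {t<..}. x' \<noteq> t \<and> \<bar>x' - t\<bar> < \<epsilon>)"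
  then obtain \<epsilon> where \<epsilon>: "\<epsilon> > 0" "\<forall>x'\<in>SQ \<inter> {t<..}. \<not> (x' \<noteq> t \<and> \<bar>x' - t\<bar> < \<epsilon>)" by auto
  obtain q where q: "q \<in> SQ" "t < q" "q < min 1 (t + \<epsilon>)" using SQ_dense[of t "min 1 (t + \<epsilon>)"] t \<epsilon> by auto
  then have "q \<in> SQ \<inter> {t<..}" by simp
  then have "\<not> (q \<noteq> t \<and> \<bar>q - t\<bar> < \<epsilon>)" using \<epsilon>(2) by blast
  then show False using q by (simp add: abs_if split: if_splits)
qed

context
  fixes hs :: "nat \<Rightarrow> real \<Rightarrow> 'a::euclidean_space" and V :: real and \<sigma> :: "nat \<Rightarrow> nat"
  assumes hsc: "\<And>n. hs n \<in> cadlag01" and hsV: "\<And>n. BVS (pval (hs n)) {0..1} V"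
    and sm: "strict_mono \<sigma>" and conv: "\<And>q. q \<in> \<rat> \<Longrightarrow> convergent (\<lambda>k. hs (\<sigma> k) q)"
begin

lemma Phi_tendsto: "q \<in> SQ \<Longrightarrow> (\<lambda>k. pval (hs (\<sigma> k)) q) \<longlonglongrightarrow> phiF hs \<sigma> q"
proof (cases "q = 0")
  case True then show ?thesis by (simp add: pval_def phiF_def)
next
  case False
  assume "q \<in> SQ"
  then have "convergent (\<lambda>k. hs (\<sigma> k) q)" by (intro conv) (simp add: SQ_def)
  then show ?thesis using False by (simp add: pval_def phiF_def convergent_LIMSEQ_iff)
qed

lemma Phi_BVS: "BVS (phiF hs \<sigma>) SQ V"
  unfolding BVS_def
proof (intro allI impI)
  fix xs assume xs: "sorted xs" "set xs \<subseteq> SQ"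
  show "LV (phiF hs \<sigma>) xs \<le> V"
  proof (rule LV_limit_le[of "\<lambda>_. xs" xs "\<lambda>k. pval (hs (\<sigma> k))"])
    show "(\<lambda>k. pval (hs (\<sigma> k)) (xs ! i)) \<longlonglongrightarrow> phiF hs \<sigma> (xs ! i)" if "i < length xs" for i
      using that xs(2) by (intro Phi_tendsto) auto
    show "LV (pval (hs (\<sigma> k))) xs \<le> V" for k
      using hsV[of "\<sigma> k"] xs unfolding BVS_def SQ_def by auto
  qed simp
qed

lemma hlim_right:
  assumes t: "0 \<le> t" "t < 1"
  shows "(phiF hs \<sigma> \<longlongrightarrow> hlim hs \<sigma> t) (at t within (SQ \<inter> {t<..}))"
proof -
  obtain l where l: "(phiF hs \<sigma> \<longlongrightarrow> l) (at t within (SQ \<inter> {t<..}))"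
  proof -
    have "\<exists>l. (phiF hs \<sigma> \<longlongrightarrow> l) (at t within (SQ \<inter> {t<..}))"
    proof (rule right_limit_exists[OF Phi_BVS, of "1 - t"])
      show "0 < 1 - t" using t by simp
      fix a b assume "t \<le> a" "a < b" "b \<le> t + (1 - t)"
      then show "\<exists>s\<in>SQ. a < s \<and> s < b" using SQ_dense t by auto
    qed
    then show ?thesis using that by blast
  qed
  have "hlim hs \<sigma> t = l" using t l SQ_islimpt[OF t] by (simp add: hlim_def tendsto_Lim)
  then show ?thesis using l by simp
qed

lemma hlim_1: "(\<lambda>k. hs (\<sigma> k) 1) \<longlonglongrightarrow> hlim hs \<sigma> 1"
  using Phi_tendsto[of 1] by (simp add: hlim_def SQ_def pval_def)

lemma hlim_near:
  assumes s: "0 \<le> s" "s < 1" and b: "s < b" "b \<le> 1"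
    and bound: "\<And>q. q \<in> SQ \<Longrightarrow> s < q \<Longrightarrow> q < b \<Longrightarrow> norm (phiF hs \<sigma> q - c) \<le> e"
  shows "norm (hlim hs \<sigma> s - c) \<le> e"
proof -
  have "hlim hs \<sigma> s \<in> cball c e"
  proof (rule Lim_in_closed_set[OF closed_cball _ SQ_islimpt[OF s] hlim_right[OF s]])
    have "\<forall>\<^sub>F q in at s within (SQ \<inter> {s<..}). q \<in> SQ \<inter> {s<..}"
      by (simp add: eventually_at_filter)
    moreover have "\<forall>\<^sub>F q in at s within (SQ \<inter> {s<..}). q < b"
      by (rule order_tendstoD(2)[OF tendsto_ident_at b(1)])
    ultimately show "\<forall>\<^sub>F q in at s within (SQ \<inter> {s<..}). phiF hs \<sigma> q \<in> cball c e"
      by eventually_elim (use bound in \<open>auto simp: dist_norm norm_minus_commute\<close>)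
  qed
  then show ?thesis by (simp add: dist_norm norm_minus_commute)
qed

end

context
  fixes hs :: "nat \<Rightarrow> real \<Rightarrow> 'a::euclidean_space" and V :: real and \<sigma> :: "nat \<Rightarrow> nat"
  assumes hsc: "\<And>n. hs n \<in> cadlag01" and hsV: "\<And>n. BVS (pval (hs n)) {0..1} V"
    and sm: "strict_mono \<sigma>" and conv: "\<And>q. q \<in> \<rat> \<Longrightarrow> convergent (\<lambda>k. hs (\<sigma> k) q)"
begin

abbreviation "H \<equiv> hlim hs \<sigma>"
abbreviation "Phi \<equiv> phiF hs \<sigma>"

lemma hlim_rc:
  assumes t: "0 \<le> t" "t < 1"
  shows "(H \<longlongrightarrow> H t) (at_right t)"
proof (rule tendstoI)
  fix \<epsilon> :: real assume \<epsilon>: "\<epsilon> > 0"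
  have "\<forall>\<^sub>F q in at t within (SQ \<inter> {t<..}). dist (Phi q) (H t) < \<epsilon> / 2"
    using hlim_right[OF hsc hsV sm conv t] \<epsilon> by (intro tendstoD) auto
  then obtain d where d: "d > 0" "\<And>q. q \<in> SQ \<inter> {t<..} \<Longrightarrow> q \<noteq> t \<Longrightarrow> dist q t < d \<Longrightarrow> dist (Phi q) (H t) < \<epsilon> / 2"
    unfolding eventually_at by blast
  show "\<forall>\<^sub>F s in at_right t. dist (H s) (H t) < \<epsilon>"
  proof (rule eventually_mono[OF eventually_at_right_real[of t "min (t + d) 1"]])
    show "t < min (t + d) 1" using d t by simp
    fix s assume s: "s \<in> {t<..<min (t + d) 1}"
    have "norm (H s - H t) \<le> \<epsilon> / 2"
    proof (rule hlim_near[OF hsc hsV sm conv, of s "min (t + d) 1"])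
      fix q assume q: "q \<in> SQ" "s < q" "q < min (t + d) 1"
      then have "dist (Phi q) (H t) < \<epsilon> / 2" using s by (intro d(2)) (auto simp: dist_real_def)
      then show "norm (Phi q - H t) \<le> \<epsilon> / 2" by (simp add: dist_norm)
    qed (use s t in auto)
    then show "dist (H s) (H t) < \<epsilon>" using \<epsilon> by (simp add: dist_norm)
  qed
qed

lemma hlim_zero: "t \<notin> {0..1} \<Longrightarrow> H t = 0"
  by (auto simp: hlim_def)

lemma Phi_RS:
  assumes PS: "prob_space M" and IDb: "\<And>n. ID M X (hs n) \<le> ereal (L + 1 / (real n + 1))"
    and xs: "sorted_wrt (<) xs" "set xs \<subseteq> SQ" "0 \<in> set xs" "1 \<in> set xs"
  shows "RS M X Phi xs \<le> ereal L"
proof -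
  have sx: "sorted xs" "distinct xs" using xs(1) by (auto simp: strict_sorted_iff)
  have x01: "set xs \<subseteq> {0..1}" using xs(2) by (auto simp: SQ_def)
  have "RS M X Phi xs \<le> liminf (\<lambda>k. RS M X (pval (hs (\<sigma> k))) xs)"
  proof (rule RS_lsc[OF PS, of "\<lambda>_. xs"])
    show "(\<lambda>k. pval (hs (\<sigma> k)) (xs ! i)) \<longlonglongrightarrow> Phi (xs ! i)" if "i < length xs" for i
      using that xs(2) by (intro Phi_tendsto[OF hsc hsV sm conv]) auto
  qed (use xs sx in auto)
  also have "\<dots> \<le> ereal L"
  proof (rule liminf_le_lim[of _ _ "\<lambda>k. 1 / (real (\<sigma> k) + 1)"])
    fix k
    have "RS M X (pval (hs (\<sigma> k))) xs = rate_sum M X (hs (\<sigma> k)) (set xs - {0})"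
      unfolding rate_sum_RS using ppts_of_list[OF sx x01 xs(3,4)] by simp
    also have "\<dots> \<le> ID M X (hs (\<sigma> k))" unfolding ID_def
      by (rule SUP_upper) (rule fin_parts_of_list[OF x01])
    also have "\<dots> \<le> ereal (L + 1 / (real (\<sigma> k) + 1))" by (rule IDb)
    finally show "RS M X (pval (hs (\<sigma> k))) xs \<le> ereal (L + 1 / (real (\<sigma> k) + 1))" .
  next
    show "(\<lambda>k. 1 / (real (\<sigma> k) + 1)) \<longlonglongrightarrow> 0"
    proof (rule tendsto_sandwich[of "\<lambda>_. 0" _ _ "\<lambda>k. 1 / (real k + 1)"])
      show "\<forall>\<^sub>F n in sequentially. 0 \<le> 1 / (real (\<sigma> n) + 1)" by simp
      show "\<forall>\<^sub>F n in sequentially. 1 / (real (\<sigma> n) + 1) \<le> 1 / (real n + 1)"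
        using seq_suble[OF sm] by (intro always_eventually allI) (simp add: frac_le)
      show "(\<lambda>n. 1 / (real n + 1)) \<longlonglongrightarrow> 0" using LIMSEQ_inverse_real_of_nat
        by (simp add: inverse_eq_divide add.commute)
    qed simp
  qed
  finally show ?thesis .
qed

lemma hlim_RS:
  assumes PS: "prob_space M" and IDb: "\<And>n. ID M X (hs n) \<le> ereal (L + 1 / (real n + 1))"
    and T: "T \<in> fin_parts"
  shows "RS M X (pval H) (ppts T) \<le> ereal L"
proof -
  define p where "p = ppts T"
  define m where "m = length p"
  note pp = ppts_props[OF T, folded p_def]
  have m2: "m \<ge> 2" using pp(9) by (simp add: m_def)
  have p0: "p ! 0 = 0" using pp(8) pp(6) by (simp add: hd_conv_nth)
  have pm: "p ! (m - 1) = 1" using pp(7) pp(6) by (simp add: last_conv_nth m_def)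
  have sw: "sorted_wrt (<) p" using pp(1,2) by (simp add: strict_sorted_iff)
  have strict: "p ! i < p ! j" if "i < j" "j < m" for i j
    using sw that by (simp add: m_def sorted_wrt_iff_nth_less)
  have p01: "p ! i \<in> {0..1}" if "i < m" for i
  proof -
    have "p ! i \<in> set p" using that by (simp add: m_def)
    then show ?thesis using pp(4) by blast
  qed
  have mid: "0 < p ! i" "p ! i < 1" if "0 < i" "i < m - 1" for i
    using strict[of 0 i] strict[of i "m - 1"] that p0 pm by auto
  have "\<exists>q. q \<in> SQ \<and> p ! i < q \<and> q < min (p ! Suc i) (p ! i + 1 / (real k + 1))"
    if "0 < i" "i < m - 1" for i k
  proof (rule bexE[OF SQ_dense[of "p ! i" "min (p ! Suc i) (p ! i + 1 / (real k + 1))"]])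
    show "p ! i < min (p ! Suc i) (p ! i + 1 / (real k + 1))" using strict[of i "Suc i"] that by simp
    show "0 \<le> p ! i" using mid(1)[OF that] by simp
    have "Suc i < m" using that by simp
    then have "p ! Suc i \<le> 1" using p01[of "Suc i"] by simp
    then show "min (p ! Suc i) (p ! i + 1 / (real k + 1)) \<le> 1" by simp
  qed auto
  then obtain rq where rq: "\<And>i k. 0 < i \<Longrightarrow> i < m - 1 \<Longrightarrow> rq i k \<in> SQ \<and> p ! i < rq i k \<and> rq i k < min (p ! Suc i) (p ! i + 1 / (real k + 1))"
    by metis
  define qv where "qv k i = (if i = 0 then 0 else if i = m - 1 then 1 else rq i k)" for k i
  define qs where "qs k = map (qv k) [0..<m]" for k
  have len: "length (qs k) = m" for k by (simp add: qs_def)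
  have qn: "qs k ! i = qv k i" if "i < m" for k i using that by (simp add: qs_def)
  have qge: "p ! i \<le> qv k i" if im: "i < m" for k i
  proof -
    consider "i = 0" | "i = m - 1" | "0 < i" "i < m - 1" using im by linarith
    then show ?thesis
    proof cases
      case 1 then show ?thesis using p0 by (simp add: qv_def)
    next
      case 2 then show ?thesis using pm m2 by (simp add: qv_def)
    next
      case 3 then show ?thesis using rq[of i k] by (simp add: qv_def less_imp_le)
    qed
  qed
  have qlt: "qv k i < p ! Suc i" if "i < m - 1" "0 < i" for k i
    using rq[of i k] that by (simp add: qv_def)
  have srt: "sorted_wrt (<) (qs k)" for k
  proof (subst sorted_wrt_iff_nth_Suc_transp, simp add: transp_def, intro allI impI)
    fix i assume i: "Suc i < length (qs k)"
    then have i': "Suc i < m" using len by simp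
    have "qv k i < qv k (Suc i)"
    proof (cases "i = 0")
      case True
      have "0 < p ! Suc 0" using strict[of 0 "Suc 0"] p0 i' True by simp
      then show ?thesis using True qge[of "Suc 0" k] i' by (simp add: qv_def)
    next
      case False
      have "i < m - 1" using i' by simp
      then have "qv k i < p ! Suc i" using qlt[of i k] False by simp
      then show ?thesis using qge[of "Suc i" k] i' by simp
    qed
    then show "qs k ! i < qs k ! Suc i" using qn i' by simp
  qed
  have setq: "set (qs k) \<subseteq> SQ" "0 \<in> set (qs k)" "1 \<in> set (qs k)" for k
  proof -
    have "qv k i \<in> SQ" if "i < m" for i
      using rq[of i k] that by (auto simp: qv_def SQ_def)
    then show "set (qs k) \<subseteq> SQ" by (auto simp: qs_def)
    have "qs k ! 0 = 0" using qn[of 0 k] m2 by (simp add: qv_def)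
    moreover have "0 < length (qs k)" using len m2 by simp
    ultimately show "0 \<in> set (qs k)" by (metis nth_mem)
    have "qv k (m - 1) = 1" using m2 by (simp add: qv_def)
    then have "qs k ! (m - 1) = 1" using qn[of "m - 1" k] m2 by simp
    moreover have "m - 1 < length (qs k)" using len m2 by simp
    ultimately show "1 \<in> set (qs k)" by (metis nth_mem)
  qed
  have conv_pts: "(\<lambda>k. qs k ! i) \<longlonglongrightarrow> p ! i" if im: "i < m" for i
  proof -
    consider "i = 0" | "i = m - 1" | "0 < i" "i < m - 1" using im by linarith
    then have "(\<lambda>k. qv k i) \<longlonglongrightarrow> p ! i"
    proof cases
      case 1 then show ?thesis using p0 by (simp add: qv_def)
    next
      case 2 then show ?thesis using pm m2 by (simp add: qv_def)
    next
      case 3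
      show ?thesis
      proof (rule tendsto_sandwich[of "\<lambda>_. p ! i" _ _ "\<lambda>k. p ! i + 1 / (real k + 1)"])
        show "\<forall>\<^sub>F k in sequentially. p ! i \<le> qv k i" using qge im by simp
        show "\<forall>\<^sub>F k in sequentially. qv k i \<le> p ! i + 1 / (real k + 1)"
          using rq[OF 3] 3 by (intro always_eventually allI) (simp add: qv_def less_imp_le)
        have "(\<lambda>k. 1 / (real k + 1)) \<longlonglongrightarrow> 0" using LIMSEQ_inverse_real_of_nat
          by (simp add: inverse_eq_divide add.commute)
        then show "(\<lambda>k. p ! i + 1 / (real k + 1)) \<longlonglongrightarrow> p ! i"
          using tendsto_add[OF tendsto_const[of "p ! i"]] by fastforce
      qed simp
    qed
    then show ?thesis using qn im by simp
  qed
  have conv_vals: "(\<lambda>k. Phi (qs k ! i)) \<longlonglongrightarrow> pval H (p ! i)" if im: "i < m" for i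
  proof -
    consider "i = 0" | "i = m - 1" | "0 < i" "i < m - 1" using im by linarith
    then have "(\<lambda>k. Phi (qv k i)) \<longlonglongrightarrow> pval H (p ! i)"
    proof cases
      case 1 then show ?thesis using p0 by (simp add: qv_def phiF_def pval_def)
    next
      case 2 then show ?thesis using pm m2 by (simp add: qv_def pval_def hlim_def)
    next
      case 3
      have pi: "0 \<le> p ! i" "p ! i < 1" using mid[OF 3] by auto
      have fl: "filterlim (\<lambda>k. qv k i) (at (p ! i) within (SQ \<inter> {p ! i<..})) sequentially"
      proof (rule filterlim_at_withinI)
        show "(\<lambda>k. qv k i) \<longlonglongrightarrow> p ! i" using conv_pts[OF im] qn im by simp
        show "\<forall>\<^sub>F k in sequentially. qv k i \<in> SQ \<inter> {p ! i<..} - {p ! i}"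
          using rq[OF 3] 3 by (intro always_eventually allI) (auto simp: qv_def)
      qed
      have "(\<lambda>k. Phi (qv k i)) \<longlonglongrightarrow> H (p ! i)"
        by (rule filterlim_compose[OF hlim_right[OF hsc hsV sm conv pi] fl])
      then show ?thesis using mid[OF 3] by (simp add: pval_def)
    qed
    then show ?thesis using qn im by simp
  qed
  have "RS M X (pval H) p \<le> liminf (\<lambda>k. RS M X Phi (qs k))"
    by (rule RS_lsc[OF PS]) (use len conv_pts conv_vals pp srt in \<open>auto simp: m_def strict_sorted_iff\<close>)
  also have "\<dots> \<le> ereal L"
    by (rule Liminf_le) (use Phi_RS[OF PS IDb srt setq] in auto)
  finally show ?thesis by (simp add: p_def)
qed

lemma hlim_ID:
  assumes PS: "prob_space M" and IDb: "\<And>n. ID M X (hs n) \<le> ereal (L + 1 / (real n + 1))"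
  shows "ID M X H \<le> ereal L"
  unfolding ID_def
proof (rule SUP_least)
  fix T assume "T \<in> fin_parts"
  then show "rate_sum M X H T \<le> ereal L" unfolding rate_sum_RS by (rule hlim_RS[OF PS IDb])
qed

lemma hlim_cadlag:
  assumes BV: "BVS (pval H) {0..1} W"
  shows "H \<in> cadlag01"
proof -
  have rc: "continuous (at_right t) H" if "t \<in> {0..<1}" for t
    using hlim_rc[of t] that by (simp add: continuous_within)
  have ll: "\<exists>l. (H \<longlongrightarrow> l) (at_left t)" if t: "t \<in> {0<..1}" for t
  proof -
    have "\<exists>l. (pval H \<longlongrightarrow> l) (at t within ({0..1} \<inter> {..<t}))"
    proof (rule left_limit_exists[OF BV, of t])
      show "0 < t" using t by simp
      fix a b assume "t - t \<le> a" "a < b" "b \<le> t"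
      then show "\<exists>s\<in>{0..1}. a < s \<and> s < b" using t
        by (intro bexI[of _ "(a + b) / 2"]) auto
    qed
    then obtain l where l: "(pval H \<longlongrightarrow> l) (at t within ({0..1} \<inter> {..<t}))" by blast
    have eqf: "at t within ({0..1} \<inter> {..<t}) = at_left t"
      by (rule at_within_nhd[of _ "{0<..<2}"]) (use t in auto)
    have "(pval H \<longlongrightarrow> l) (at_left t)" using l eqf by simp
    moreover have "\<forall>\<^sub>F s in at_left t. pval H s = H s"
      by (rule eventually_mono[OF eventually_at_left_real[of 0 t]]) (use t in \<open>auto simp: pval_def\<close>)
    ultimately have "(H \<longlongrightarrow> l) (at_left t)" by (rule Lim_transform_eventually)
    then show ?thesis by blast
  qed
  show ?thesis unfolding cadlag01_def using rc ll hlim_zero by blast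
qed

end

context
  fixes hs :: "nat \<Rightarrow> real \<Rightarrow> 'a::euclidean_space" and V :: real and \<sigma> :: "nat \<Rightarrow> nat"
  assumes hsc: "\<And>n. hs n \<in> cadlag01" and hsV: "\<And>n. BVS (pval (hs n)) {0..1} V"
    and sm: "strict_mono \<sigma>" and conv: "\<And>q. q \<in> \<rat> \<Longrightarrow> convergent (\<lambda>k. hs (\<sigma> k) q)"
begin

lemma hlim_L1:
  assumes \<epsilon>: "\<epsilon> > 0"
  shows "\<exists>N>0. \<exists>K. \<forall>k\<ge>K. \<exists>c. (\<forall>j. 0 \<le> c j) \<and> (\<Sum>j<N. c j) / real N < \<epsilon> \<and>
           (\<forall>s. 0 < s \<longrightarrow> s < 1 \<longrightarrow> norm (hs (\<sigma> k) s - hlim hs \<sigma> s) \<le> stepf N c s)"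
proof -
  let ?H = "hlim hs \<sigma>" and ?Phi = "phiF hs \<sigma>"
  have V0: "0 \<le> V" using BVS_V_nonneg[OF hsV[of 0]] .
  define N where "N = nat \<lceil>4 * V / \<epsilon>\<rceil> + 1"
  have N0: "N > 0" by (simp add: N_def)
  have NV: "4 * V / \<epsilon> < real N" unfolding N_def by linarith
  then have NV': "2 * V / real N < \<epsilon> / 2" using \<epsilon> N0 by (simp add: field_simps)
  define e where "e k j = norm (pval (hs (\<sigma> k)) (real j / real N) - ?Phi (real j / real N))" for k j
  have e0: "(\<lambda>k. \<Sum>j<N. e k j) \<longlonglongrightarrow> 0"
  proof -
    have "(\<lambda>k. e k j) \<longlonglongrightarrow> 0" if "j < N" for j
    proof -
      have "(\<lambda>k. pval (hs (\<sigma> k)) (real j / real N)) \<longlonglongrightarrow> ?Phi (real j / real N)"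
        using that N0 by (intro Phi_tendsto[OF hsc hsV sm conv] grid_SQ) auto
      then have "(\<lambda>k. pval (hs (\<sigma> k)) (real j / real N) - ?Phi (real j / real N)) \<longlonglongrightarrow> 0"
        by (simp add: LIM_zero)
      then show ?thesis unfolding e_def by (simp add: tendsto_norm_zero)
    qed
    then have "(\<lambda>k. \<Sum>j<N. e k j) \<longlonglongrightarrow> (\<Sum>j<N. (0::real))" by (intro tendsto_sum) auto
    then show ?thesis by simp
  qed
  have "\<forall>\<^sub>F k in sequentially. (\<Sum>j<N. e k j) < real N * \<epsilon> / 2"
    using e0 N0 \<epsilon> by (intro order_tendstoD(2)) auto
  then obtain K where K: "\<And>k. k \<ge> K \<Longrightarrow> (\<Sum>j<N. e k j) < real N * \<epsilon> / 2"
    by (auto simp: eventually_sequentially)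
  have "\<forall>k\<ge>K. \<exists>c. (\<forall>j. 0 \<le> c j) \<and> (\<Sum>j<N. c j) / real N < \<epsilon> \<and>
           (\<forall>s. 0 < s \<longrightarrow> s < 1 \<longrightarrow> norm (hs (\<sigma> k) s - ?H s) \<le> stepf N c s)"
  proof (intro allI impI)
    fix k assume k: "k \<ge> K"
    let ?F = "pval (hs (\<sigma> k))"
    define c where "c j = (if j < N then Mosc ?F {0..1} (real j / real N) (real (Suc j) / real N) + e k j
       + Mosc ?Phi SQ (real j / real N) (real (Suc j) / real N) else 0)" for j
    have c0: "0 \<le> c j" for j
    proof (cases "j < N")
      case True
      then have j1: "real j / real N \<le> 1" using N0 by (simp add: field_simps)
      have "0 \<le> Mosc ?F {0..1} (real j / real N) (real (Suc j) / real N)"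
        using hsV j1 by (intro Mosc_nonneg) (auto simp: divide_right_mono)
      moreover have "0 \<le> Mosc ?Phi SQ (real j / real N) (real (Suc j) / real N)"
        using True N0
        by (intro Mosc_nonneg[OF Phi_BVS[OF hsc hsV sm conv] grid_SQ]) (auto simp: divide_right_mono)
      ultimately show ?thesis using True by (simp add: c_def e_def)
    qed (simp add: c_def)
    have s1: "(\<Sum>j<N. Mosc ?F {0..1} (real j / real N) (real (Suc j) / real N)) \<le> V"
      by (rule Mosc_sum[OF hsV N0]) (use N0 in \<open>auto simp: field_simps\<close>)
    have s2: "(\<Sum>j<N. Mosc ?Phi SQ (real j / real N) (real (Suc j) / real N)) \<le> V"
      by (rule Mosc_sum[OF Phi_BVS[OF hsc hsV sm conv] N0 grid_SQ[OF N0]])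
    have "(\<Sum>j<N. c j) = (\<Sum>j<N. Mosc ?F {0..1} (real j / real N) (real (Suc j) / real N))
       + (\<Sum>j<N. e k j) + (\<Sum>j<N. Mosc ?Phi SQ (real j / real N) (real (Suc j) / real N))"
      unfolding sum.distrib[symmetric] by (rule sum.cong) (auto simp: c_def)
    then have "(\<Sum>j<N. c j) < V + real N * \<epsilon> / 2 + V"
      using s1 s2 K[OF k] by linarith
    then have "(\<Sum>j<N. c j) / real N < (2 * V) / real N + \<epsilon> / 2"
      using N0 by (simp add: field_simps)
    then have sumc: "(\<Sum>j<N. c j) / real N < \<epsilon>" using NV' by simp
    have pw: "norm (hs (\<sigma> k) s - ?H s) \<le> stepf N c s" if s: "0 < s" "s < 1" for s
    proof -
      obtain j where j: "j < N" "real j / real N \<le> s" "s < real (Suc j) / real N"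
        using cell_of[OF N0, of s] s by auto
      define a where "a = real j / real N"
      define b where "b = real (Suc j) / real N"
      have a0: "0 \<le> a" by (simp add: a_def)
      have b1: "b \<le> 1" using j N0 by (simp add: b_def field_simps)
      have aSQ: "a \<in> SQ" unfolding a_def using j N0 by (intro grid_SQ) auto
      have t1: "norm (?F s - ?F a) \<le> Mosc ?F {0..1} a b"
        by (rule Mosc_le[OF hsV]) (use j s a0 b1 in \<open>auto simp: a_def b_def\<close>)
      have t2: "norm (?F a - ?Phi a) = e k j" by (simp add: e_def a_def)
      have t3: "norm (?H s - ?Phi a) \<le> Mosc ?Phi SQ a b"
      proof (rule hlim_near[OF hsc hsV sm conv])
        fix q assume q: "q \<in> SQ" "s < q" "q < b"
        show "norm (?Phi q - ?Phi a) \<le> Mosc ?Phi SQ a b"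
          by (rule Mosc_le[OF Phi_BVS[OF hsc hsV sm conv]]) (use q aSQ j in \<open>auto simp: a_def b_def\<close>)
      qed (use s j b1 in \<open>auto simp: b_def\<close>)
      have "norm (hs (\<sigma> k) s - ?H s) = norm ((?F s - ?F a) + (?F a - ?Phi a) + (?Phi a - ?H s))"
        using s by (simp add: pval_def)
      also have "\<dots> \<le> norm (?F s - ?F a) + norm (?F a - ?Phi a) + norm (?Phi a - ?H s)"
        by (rule order_trans[OF norm_triangle_ineq add_right_mono[OF norm_triangle_ineq]])
      also have "\<dots> \<le> c j" using t1 t2 t3 j(1) by (simp add: c_def a_def b_def norm_minus_commute)
      also have "\<dots> = stepf N c s" using stepf_at[OF N0 j] by simp
      finally show ?thesis .
    qed
    show "\<exists>c. (\<forall>j. 0 \<le> c j) \<and> (\<Sum>j<N. c j) / real N < \<epsilon> \<and>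
           (\<forall>s. 0 < s \<longrightarrow> s < 1 \<longrightarrow> norm (hs (\<sigma> k) s - ?H s) \<le> stepf N c s)"
      using c0 sumc pw by blast
  qed
  then show ?thesis using N0 by blast
qed

end

lemma stepf_shift:
  assumes N: "N > 0" and s: "0 \<le> s" "s < 1"
  shows "stepf N (\<lambda>j. c j + d) s = stepf N c s + d"
proof -
  obtain j where j: "j < N" "real j / real N \<le> s" "s < real (Suc j) / real N"
    using cell_of[OF N s] by blast
  show ?thesis using stepf_at[OF N j, of "\<lambda>j. c j + d"] stepf_at[OF N j, of c] by simp
qed

lemma integral_bound:
  fixes f :: "real \<Rightarrow> real"
  assumes N1: "N1 > 0" and N2: "N2 > 0"
    and bd: "\<And>s. 0 < s \<Longrightarrow> s < 1 \<Longrightarrow> f s \<le> stepf N1 c1 s + stepf N2 c2 s"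
    and c1: "\<And>j. 0 \<le> c1 j" and c2: "\<And>j. 0 \<le> c2 j"
  shows "(LINT s:{0..1}|lborel. f s) \<le> (\<Sum>j<N1. c1 j) / real N1 + (\<Sum>j<N2. c2 j) / real N2"
proof -
  let ?W = "\<lambda>s. indicator {0..1} s *\<^sub>R stepf N1 c1 s + indicator {0..1} s *\<^sub>R stepf N2 c2 s"
  have i1: "integrable lborel (\<lambda>s. indicator {0..1} s *\<^sub>R stepf N1 c1 s)"
    using stepf_int(1)[OF N1, of c1] by (simp add: set_integrable_def)
  have i2: "integrable lborel (\<lambda>s. indicator {0..1} s *\<^sub>R stepf N2 c2 s)"
    using stepf_int(1)[OF N2, of c2] by (simp add: set_integrable_def)
  have "(LINT s:{0..1}|lborel. f s) \<le> integral\<^sup>L lborel ?W"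
    unfolding set_lebesgue_integral_def
  proof (rule integral_mono_AE')
    show "integrable lborel ?W" using i1 i2 by (rule Bochner_Integration.integrable_add)
    have "AE s in lborel. s \<noteq> 0" "AE s in lborel. s \<noteq> 1" by (rule AE_lborel_singleton)+
    then show "AE s in lborel. indicator {0..1} s *\<^sub>R f s \<le> ?W s"
    proof eventually_elim
      case (elim s)
      show ?case
      proof (cases "s \<in> {0..1}")
        case True
        then have "0 < s" "s < 1" using elim by auto
        then show ?thesis using bd[of s] True by (simp add: indicator_def distrib_left)
      qed (auto simp: indicator_def)
    qed
    show "AE s in lborel. 0 \<le> ?W s"
      using stepf_nonneg[of c1, OF c1] stepf_nonneg[of c2, OF c2] by (simp add: indicator_def)
  qed
  also have "\<dots> = (LINT s:{0..1}|lborel. stepf N1 c1 s) + (LINT s:{0..1}|lborel. stepf N2 c2 s)"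
    unfolding set_lebesgue_integral_def by (rule Bochner_Integration.integral_add[OF i1 i2])
  also have "\<dots> = (\<Sum>j<N1. c1 j) / real N1 + (\<Sum>j<N2. c2 j) / real N2"
    using stepf_int(2)[OF N1] stepf_int(2)[OF N2] by simp
  finally show ?thesis .
qed

lemma compact_main:
  fixes M :: "'b measure" and X :: "'b \<Rightarrow> 'a::euclidean_space"
    and hs gs :: "nat \<Rightarrow> real \<Rightarrow> 'a"
  assumes PS: "prob_space M" and DL0: "0 \<in> interior (DL M X)"
    and hsB: "\<And>n. hs n \<in> BV01" and gsB: "\<And>n. gs n \<in> BV01"
    and IDb: "\<And>n. ID M X (hs n) \<le> ereal (L + 1 / (real n + 1))"
    and rho: "\<And>n. rho1' (gs n) (hs n) < ereal (1 / (real n + 1))"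
  shows "\<exists>h\<in>BV01. ID M X h \<le> ereal L \<and> (\<forall>\<epsilon>>0. \<exists>n. rho_star (gs n) h < ereal \<epsilon>)"
proof -
  obtain c C where c: "c > 0" and gr: "\<forall>v. ereal (c * norm v - C) \<le> Irate M X v"
    using linear_growth[OF DL0] by blast
  define V where "V = (L + 1 + C) / c"
  have hsc: "hs n \<in> cadlag01" for n using hsB by (simp add: BV01_def)
  have gsc: "gs n \<in> cadlag01" for n using gsB by (simp add: BV01_def)
  have hsV: "BVS (pval (hs n)) {0..1} V" for n
  proof -
    have "ID M X (hs n) \<le> ereal (L + 1)"
      by (rule order_trans[OF IDb]) (simp add: field_simps)
    then show ?thesis unfolding V_def by (intro Var_BVS ID_Var_bound[OF gr c])
  qed
  have bd: "norm (hs n t) \<le> V" for n t by (rule BVS_bound[OF hsc hsV])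
  obtain \<sigma> where sm: "strict_mono \<sigma>" and cv: "\<forall>q\<in>\<rat>. convergent (\<lambda>k. hs (\<sigma> k) q)"
    using diag_subseq[of hs V] bd by blast
  have conv: "\<And>q. q \<in> \<rat> \<Longrightarrow> convergent (\<lambda>k. hs (\<sigma> k) q)" using cv by blast
  define H where "H = hlim hs \<sigma>"
  have IDH: "ID M X H \<le> ereal L" unfolding H_def by (rule hlim_ID[OF hsc hsV sm conv PS IDb])
  define W where "W = (L + C) / c"
  have VarH: "Var H \<le> ereal W" unfolding W_def by (rule ID_Var_bound[OF gr c IDH])
  have HV: "BVS (pval H) {0..1} W" by (rule Var_BVS[OF VarH])
  have Hc: "H \<in> cadlag01" unfolding H_def by (rule hlim_cadlag[OF hsc hsV sm conv HV[unfolded H_def]])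
  have HB: "H \<in> BV01" using Hc VarH by (auto simp: BV01_def)
  have V0: "0 \<le> V" using BVS_V_nonneg[OF hsV[of 0]] .
  have close: "\<exists>n. rho_star (gs n) H < ereal \<epsilon>" if \<epsilon>: "\<epsilon> > 0" for \<epsilon>
  proof -
    define N1 where "N1 = nat \<lceil>32 * V / \<epsilon>\<rceil> + 1"
    have N1: "N1 > 0" by (simp add: N1_def)
    have "32 * V / \<epsilon> < real N1" unfolding N1_def by linarith
    then have N1b: "4 * V / real N1 < \<epsilon> / 8" using \<epsilon> N1 by (simp add: field_simps)
    have \<epsilon>8: "\<epsilon> / 8 > 0" using \<epsilon> by simp
    have L1: "\<exists>N2>0. \<exists>K. \<forall>k\<ge>K. \<exists>c. (\<forall>j. 0 \<le> c j) \<and> (\<Sum>j<N2. c j) / real N2 < \<epsilon> / 8 \<and>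
           (\<forall>s. 0 < s \<longrightarrow> s < 1 \<longrightarrow> norm (hs (\<sigma> k) s - H s) \<le> stepf N2 c s)"
      unfolding H_def by (rule hlim_L1[OF hsc hsV sm _ \<epsilon>8]) (rule conv)
    obtain N2 where N2: "N2 > 0" and "\<exists>K. \<forall>k\<ge>K. \<exists>c. (\<forall>j. 0 \<le> c j) \<and> (\<Sum>j<N2. c j) / real N2 < \<epsilon> / 8 \<and>
           (\<forall>s. 0 < s \<longrightarrow> s < 1 \<longrightarrow> norm (hs (\<sigma> k) s - H s) \<le> stepf N2 c s)"
      using L1 by blast
    then obtain K where K: "\<forall>k\<ge>K. \<exists>c. (\<forall>j. 0 \<le> c j) \<and> (\<Sum>j<N2. c j) / real N2 < \<epsilon> / 8 \<and>
           (\<forall>s. 0 < s \<longrightarrow> s < 1 \<longrightarrow> norm (hs (\<sigma> k) s - H s) \<le> stepf N2 c s)" by (elim exE)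
    define d where "d = min (1 / (2 * real N1)) (\<epsilon> / 8)"
    have d0: "d > 0" using N1 \<epsilon> by (simp add: d_def)
    have "(\<lambda>k. 1 / (real k + 1)) \<longlonglongrightarrow> 0" using LIMSEQ_inverse_real_of_nat
      by (simp add: inverse_eq_divide add.commute)
    then have ev1: "\<forall>\<^sub>F k in sequentially. 1 / (real k + 1) < d" using d0 by (intro order_tendstoD(2))
    have lim1: "(\<lambda>k. hs (\<sigma> k) 1) \<longlonglongrightarrow> H 1"
      unfolding H_def by (rule hlim_1[OF hsc hsV sm]) (rule conv)
    have ev2: "\<forall>\<^sub>F k in sequentially. dist (hs (\<sigma> k) 1) (H 1) < \<epsilon> / 8"
      by (rule tendstoD[OF lim1 \<epsilon>8])
    have ev3: "\<forall>\<^sub>F k in sequentially. K \<le> k" by (rule eventually_ge_at_top)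
    have "\<forall>\<^sub>F k in sequentially. 1 / (real k + 1) < d \<and> dist (hs (\<sigma> k) 1) (H 1) < \<epsilon> / 8 \<and> K \<le> k"
      using ev1 ev2 ev3 by eventually_elim blast
    then obtain k0 where k0: "\<And>k. k \<ge> k0 \<Longrightarrow> 1 / (real k + 1) < d \<and> dist (hs (\<sigma> k) 1) (H 1) < \<epsilon> / 8 \<and> K \<le> k"
      unfolding eventually_sequentially by blast
    define k where "k = k0"
    have k1: "1 / (real k + 1) < d" and k2: "dist (hs (\<sigma> k) 1) (H 1) < \<epsilon> / 8" and k3: "K \<le> k"
      using k0[of k0] by (simp_all add: k_def)
    define n where "n = \<sigma> k"
    define \<delta> where "\<delta> = 1 / (real n + 1)"
    have \<delta>0: "\<delta> > 0" by (simp add: \<delta>_def)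
    have "\<delta> \<le> 1 / (real k + 1)" unfolding \<delta>_def n_def using seq_suble[OF sm, of k] by (simp add: frac_le)
    then have \<delta>d: "\<delta> < d" using k1 by simp
    have \<delta>N: "2 * \<delta> \<le> 1 / real N1" using \<delta>d N1 by (simp add: d_def field_simps)
    have \<delta>e: "\<delta> < \<epsilon> / 8" using \<delta>d by (simp add: d_def)
    have "\<exists>c. (\<forall>j. 0 \<le> c j) \<and> (\<Sum>j<N2. c j) / real N2 < \<epsilon> / 8 \<and>
           (\<forall>s. 0 < s \<longrightarrow> s < 1 \<longrightarrow> norm (hs n s - H s) \<le> stepf N2 c s)"
      using K k3 unfolding n_def by blast
    then obtain c2 where c2: "\<And>j. 0 \<le> c2 j" "(\<Sum>j<N2. c2 j) / real N2 < \<epsilon> / 8"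
      "\<And>s. 0 < s \<Longrightarrow> s < 1 \<Longrightarrow> norm (hs n s - H s) \<le> stepf N2 c2 s"
      by blast
    define M1 where "M1 = (\<lambda>i. if i < N1 then Mosc (pval (hs n)) {0..1} (real i / real N1) (real (Suc i) / real N1) else 0)"
    define c1 where "c1 j = M1 (j - 1) + M1 j + M1 (Suc j)" for j
    have c1s: "(\<Sum>j<N1. c1 j) \<le> 4 * V" "\<And>j. 0 \<le> c1 j"
      using rho1'_step_sum[OF hsV N1] unfolding c1_def M1_def by auto
    have pw1: "norm (gs n s - hs n s) \<le> \<delta> + stepf N1 c1 s" if "0 < s" "s < 1" for s
      using rho1'_pointwise[OF gsc hsc hsV rho[of n, folded \<delta>_def] \<delta>0 N1 \<delta>N that]
      unfolding c1_def M1_def by simp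
    have pw: "norm (gs n s - H s) \<le> stepf N1 (\<lambda>j. c1 j + \<delta>) s + stepf N2 c2 s" if s: "0 < s" "s < 1" for s
    proof -
      have "norm (gs n s - H s) \<le> norm (gs n s - hs n s) + norm (hs n s - H s)"
        by (rule norm_diff_triangle_ineq[of "gs n s" "hs n s" "hs n s" "H s", simplified])
      also have "\<dots> \<le> (\<delta> + stepf N1 c1 s) + stepf N2 c2 s" using pw1[OF s] c2(3)[OF s] by simp
      also have "\<dots> = stepf N1 (\<lambda>j. c1 j + \<delta>) s + stepf N2 c2 s"
        using stepf_shift[OF N1, of s c1 \<delta>] s by simp
      finally show ?thesis .
    qed
    have "(LINT s:{0..1}|lborel. norm (gs n s - H s)) \<le> (\<Sum>j<N1. c1 j + \<delta>) / real N1 + (\<Sum>j<N2. c2 j) / real N2"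
      by (rule integral_bound[OF N1 N2 pw]) (use c1s(2) \<delta>0 c2(1) in \<open>auto intro: add_nonneg_nonneg less_imp_le\<close>)
    also have "(\<Sum>j<N1. c1 j + \<delta>) / real N1 = (\<Sum>j<N1. c1 j) / real N1 + \<delta>"
      using N1 by (simp add: sum.distrib add_divide_distrib)
    finally have I: "(LINT s:{0..1}|lborel. norm (gs n s - H s)) \<le> (\<Sum>j<N1. c1 j) / real N1 + \<delta> + (\<Sum>j<N2. c2 j) / real N2" .
    have "(\<Sum>j<N1. c1 j) / real N1 \<le> 4 * V / real N1" using c1s(1) N1 by (simp add: divide_right_mono)
    then have I': "(LINT s:{0..1}|lborel. norm (gs n s - H s)) < 3 * \<epsilon> / 8"
      using I N1b \<delta>e c2(2) by linarith
    have e1: "norm (gs n 1 - hs n 1) < \<delta>" by (rule rho1'_end[OF gsc hsc rho[of n, folded \<delta>_def]])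
    have e2: "norm (hs n 1 - H 1) < \<epsilon> / 8" using k2 by (simp add: n_def dist_norm)
    have "norm (gs n 1 - H 1) \<le> norm (gs n 1 - hs n 1) + norm (hs n 1 - H 1)"
      by (rule norm_diff_triangle_ineq[of "gs n 1" "hs n 1" "hs n 1" "H 1", simplified])
    then have "norm (gs n 1 - H 1) < \<epsilon> / 4" using e1 e2 \<delta>e by linarith
    then have "(LINT s:{0..1}|lborel. norm (gs n s - H s)) + norm (gs n 1 - H 1) < \<epsilon>"
      using I' \<epsilon> by linarith
    then show ?thesis by (intro exI[of _ n]) (simp add: rho_star_def)
  qed
  show ?thesis using HB IDH close by blast
qed

theorem proposition5p4:
  fixes M :: "'b measure" and X :: "'b \<Rightarrow> 'a::euclidean_space"
    and B :: "(real \<Rightarrow> 'a) set"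
  assumes "prob_space M"
    and "X \<in> borel_measurable M"
    and "0 \<in> interior (DL M X)"
    and "B \<subseteq> BV01"
    and "mclosure rho1' BV01 B = mclosure rho_star BV01 B"
  shows "((\<lambda>\<epsilon>. INF h\<in>mnbhd rho1' BV01 B \<epsilon>. ID M X h)
            \<longlongrightarrow> (INF h\<in>mclosure rho1' BV01 B. ID M X h)) (at_right 0)
         \<and> (B \<noteq> {} \<longrightarrow> (\<exists>h\<in>mclosure rho1' BV01 B.
               ID M X h = (INF g\<in>mclosure rho1' BV01 B. ID M X g)))"
proof -
  note PS = assms(1) and DL0 = assms(3) and BB = assms(4) and clo = assms(5)
  define f where "f \<epsilon> = (INF h\<in>mnbhd rho1' BV01 B \<epsilon>. ID M X h)" for \<epsilon>
  define Cl where "Cl = mclosure rho1' BV01 B"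
  define C where "C = (INF h\<in>Cl. ID M X h)"
  define L where "L = (SUP \<epsilon>\<in>{0<..}. f \<epsilon>)"
  have anti: "f \<epsilon>' \<le> f \<epsilon>" if "0 < \<epsilon>" "\<epsilon> \<le> \<epsilon>'" for \<epsilon> \<epsilon>'
  proof -
    have "mnbhd rho1' BV01 B \<epsilon> \<subseteq> mnbhd rho1' BV01 B \<epsilon>'"
    proof
      fix x assume "x \<in> mnbhd rho1' BV01 B \<epsilon>"
      then obtain g where g: "x \<in> BV01" "g \<in> B" "rho1' g x < ereal \<epsilon>" by (auto simp: mnbhd_def)
      have "ereal \<epsilon> \<le> ereal \<epsilon>'" using that by simp
      then have "rho1' g x < ereal \<epsilon>'" using g(3) by (rule order.strict_trans2[rotated])
      then show "x \<in> mnbhd rho1' BV01 B \<epsilon>'" using g by (auto simp: mnbhd_def)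
    qed
    then show ?thesis unfolding f_def by (rule INF_superset_mono) simp
  qed
  have fC: "f \<epsilon> \<le> C" if "0 < \<epsilon>" for \<epsilon>
  proof -
    have "Cl \<subseteq> mnbhd rho1' BV01 B \<epsilon>"
      using that by (auto simp: Cl_def mclosure_def mnbhd_def)
    then show ?thesis unfolding f_def C_def by (rule INF_superset_mono) simp
  qed
  have fL: "f \<epsilon> \<le> L" if "0 < \<epsilon>" for \<epsilon> unfolding L_def using that by (intro SUP_upper) simp
  have LC: "L \<le> C" unfolding L_def by (rule SUP_least) (use fC in simp)
  have tend: "(f \<longlongrightarrow> L) (at_right 0)"
  proof (rule order_tendstoI)
    fix y assume y: "y < L"
    then obtain \<epsilon>0 where \<epsilon>0: "\<epsilon>0 > 0" "y < f \<epsilon>0" unfolding L_def by (auto simp: less_SUP_iff)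
    show "\<forall>\<^sub>F \<epsilon> in at_right 0. y < f \<epsilon>"
    proof (rule eventually_mono[OF eventually_at_right_real[of 0 \<epsilon>0]])
      show "0 < \<epsilon>0" by fact
      fix \<epsilon> assume "\<epsilon> \<in> {0<..<\<epsilon>0}"
      then have "f \<epsilon>0 \<le> f \<epsilon>" by (intro anti) auto
      then show "y < f \<epsilon>" using \<epsilon>0 by simp
    qed
  next
    fix y assume y: "L < y"
    show "\<forall>\<^sub>F \<epsilon> in at_right 0. f \<epsilon> < y"
      by (rule eventually_mono[OF eventually_at_right_less]) (use fL y in \<open>auto intro: order.strict_trans1\<close>)
  qed
  have fnn: "0 \<le> f \<epsilon>" for \<epsilon> unfolding f_def by (rule INF_greatest) (rule ID_nonneg[OF PS])
  have inCl: "g \<in> Cl" if "g \<in> B" for g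
  proof -
    have "g \<in> mclosure rho_star BV01 B"
      using that BB by (auto simp: mclosure_def rho_star_def intro!: bexI[of _ g])
    then show ?thesis using clo by (simp add: Cl_def)
  qed
  have key: "\<exists>h\<in>Cl. ID M X h \<le> L" if Lfin: "L < \<infinity>"
  proof -
    have L0: "0 \<le> L" using fL[of 1] fnn[of 1] by simp
    then obtain Lr where Lr: "L = ereal Lr" using Lfin by (cases L) auto
    have "\<exists>h. h \<in> mnbhd rho1' BV01 B (1 / (real n + 1)) \<and> ID M X h < ereal (Lr + 1 / (real n + 1))" for n
    proof -
      have "f (1 / (real n + 1)) \<le> L" by (rule fL) simp
      also have "\<dots> < ereal (Lr + 1 / (real n + 1))" using Lr by simp
      finally show ?thesis unfolding f_def by (auto simp: INF_less_iff)
    qed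
    then obtain hs where hs: "\<And>n. hs n \<in> mnbhd rho1' BV01 B (1 / (real n + 1))"
      "\<And>n. ID M X (hs n) < ereal (Lr + 1 / (real n + 1))" by metis
    have "\<exists>g. g \<in> B \<and> rho1' g (hs n) < ereal (1 / (real n + 1))" for n
      using hs(1)[of n] by (auto simp: mnbhd_def)
    then obtain gs where gs: "\<And>n. gs n \<in> B" "\<And>n. rho1' (gs n) (hs n) < ereal (1 / (real n + 1))" by metis
    have hsB: "hs n \<in> BV01" for n using hs(1)[of n] by (simp add: mnbhd_def)
    have gsB: "gs n \<in> BV01" for n using gs(1)[of n] BB by auto
    obtain h where h: "h \<in> BV01" "ID M X h \<le> ereal Lr" "\<forall>\<epsilon>>0. \<exists>n. rho_star (gs n) h < ereal \<epsilon>"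
      using compact_main[OF PS DL0 hsB gsB less_imp_le[OF hs(2)] gs(2)] by blast
    have "h \<in> mclosure rho_star BV01 B" using h gs(1) by (auto simp: mclosure_def)
    then have "h \<in> Cl" using clo by (simp add: Cl_def)
    then show ?thesis using h(2) Lr by auto
  qed
  show ?thesis
  proof (cases "L < \<infinity>")
    case True
    obtain h where h: "h \<in> Cl" "ID M X h \<le> L" using key[OF True] by blast
    have "C \<le> ID M X h" unfolding C_def using h(1) by (rule INF_lower)
    then have LCe: "L = C" "ID M X h = C" using h(2) LC by auto
    show ?thesis using tend LCe h(1) unfolding f_def C_def Cl_def by auto
  next
    case False
    then have Linf: "L = \<infinity>" by simp
    then have Cinf: "C = \<infinity>" using LC by simp
    have att: "\<exists>h\<in>Cl. ID M X h = C" if Bne: "B \<noteq> {}"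
    proof -
      obtain g where g: "g \<in> B" using Bne by blast
      then have "g \<in> Cl" by (rule inCl)
      moreover have "C \<le> ID M X g" unfolding C_def using \<open>g \<in> Cl\<close> by (rule INF_lower)
      ultimately show ?thesis using Cinf by (intro bexI[of _ g]) auto
    qed
    show ?thesis using tend att Linf Cinf unfolding f_def C_def Cl_def by auto
  qed
qed

end
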